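(* Let $(W,S)$ be a right-angled Coxeter system, $q>0$ and $p=(q-1)/\sqrt q$. For every $\mathbf{w}\in W$, $$T_{\mathbf{w}}=\sum_{(\mathbf{w}',\Gamma_0,\mathbf{w}'')\in A_{\mathbf{w}}} p^{\#V\Gamma_0}\, T^{(1)}_{\mathbf{w}'}\,P_{V\Gamma_0}\,T^{(1)}_{\mathbf{w}''}$$ as operators on $L^2(\mathcal{M}_q)$.
   Context: $(W,S)$: $S$ finite, $m(s,s)=1$, $m(s,t)=m(t,s)\in\{2,\infty\}$ for $s\neq t$, $W=\langle S\mid (st)^{m(s,t)}=1\rangle$; $|\mathbf{w}|$ word length. The Hecke algebra has linear basis $\{T_{\mathbf{w}}\}_{\mathbf{w}\in W}$, $T_e=1$, $T_sT_{\mathbf{w}}=T_{s\mathbf{w}}$ if $|s\mathbf{w}|>|\mathbf{w}|$ and $T_{s\mathbf{w}}+pT_{\mathbf{w}}$ otherwise, $T_{\mathbf{w}}^*=T_{\mathbf{w}^{-1}}$; $L^2(\mathcal{M}_q)$ is the GNS space of the trace $\tau(T_{\mathbf{w}})=\delta_{\mathbf{w},e}$ with cyclic vector $\Omega=T_e$ (so $\{T_{\mathbf{w}}\Omega\}$ is an orthonormal basis), and $T_{\mathbf{w}}$ acts by left multiplication. For $\mathbf{v}\in W$, $T^{(1)}_{\mathbf{v}}$ is the unitary on $L^2(\mathcal{M}_q)$ with $T^{(1)}_{\mathbf{v}}(T_{\mathbf{w}}\Omega)=T_{\mathbf{v}\mathbf{w}}\Omega$. For $\mathbf{u}\in W$,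 $P_{\mathbf{u}}$ is the orthogonal projection onto the closed span of $\{T_{\mathbf{v}}\Omega: |\mathbf{u}^{-1}\mathbf{v}|=|\mathbf{v}|-|\mathbf{u}|\}$. A clique is a (possibly empty) set $V\Gamma_0\subseteq S$ of pairwise distinct generators with $m(s,t)=2$ for all distinct $s,t\in V\Gamma_0$; $\#V\Gamma_0=|V\Gamma_0|$ is its number of elements, $V\Gamma_0$ also denotes the product in $W$ of its elements, and $P_{V\Gamma_0}$ is $P_{\mathbf{u}}$ for this product $\mathbf{u}$. $A_{\mathbf{w}}$ is the set of triples $(\mathbf{w}',\Gamma_0,\mathbf{w}'')$ with $\mathbf{w}',\mathbf{w}''\in W$ and $\Gamma_0$ a clique such that (1) $\mathbf{w}=\mathbf{w}'\,V\Gamma_0\,\mathbf{w}''$, (2) $|\mathbf{w}|=|\mathbf{w}'|+|V\Gamma_0|+|\mathbf{w}''|$, (3) every $s\in S$ that commutes with all elements of $V\Gamma_0$ satisfies $|\mathbf{w}'s|>|\mathbf{w}'|$. *)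

theory Defs
  imports "HOL-Analysis.Analysis"
begin

text \<open>Right-angled Coxeter system given by a finite generating set S and a symmetric
  relation comm on S: comm s t (s \<noteq> t) means m(s,t) = 2, otherwise m(s,t) = \<infinity>.\<close>

inductive cstep :: "'a set \<Rightarrow> ('a \<Rightarrow> 'a \<Rightarrow> bool) \<Rightarrow> 'a list \<Rightarrow> 'a list \<Rightarrow> bool"
  for S comm where
  del: "s \<in> S \<Longrightarrow> cstep S comm (xs @ [s, s] @ ys) (xs @ ys)"
| swap: "s \<in> S \<Longrightarrow> t \<in> S \<Longrightarrow> s \<noteq> t \<Longrightarrow> comm s t \<Longrightarrow>
          cstep S comm (xs @ [s, t] @ ys) (xs @ [t, s] @ ys)"

definition wcls :: "'a set \<Rightarrow> ('a \<Rightarrow> 'a \<Rightarrow> bool) \<Rightarrow> 'a list \<Rightarrow> 'a list set" where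
  "wcls S comm xs = {ys. equivclp (cstep S comm) xs ys}"

definition cox_group :: "'a set \<Rightarrow> ('a \<Rightarrow> 'a \<Rightarrow> bool) \<Rightarrow> 'a list set set" where
  "cox_group S comm = {wcls S comm xs | xs. xs \<in> lists S}"

definition wmul :: "'a set \<Rightarrow> ('a \<Rightarrow> 'a \<Rightarrow> bool) \<Rightarrow> 'a list set \<Rightarrow> 'a list set \<Rightarrow> 'a list set" where
  "wmul S comm u v = {zs. \<exists>xs\<in>u. \<exists>ys\<in>v. equivclp (cstep S comm) (xs @ ys) zs}"

definition winv :: "'a list set \<Rightarrow> 'a list set" where
  "winv u = rev ` u"

definition wunit :: "'a set \<Rightarrow> ('a \<Rightarrow> 'a \<Rightarrow> bool) \<Rightarrow> 'a list set" where
  "wunit S comm = wcls S comm []"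

definition wgen :: "'a set \<Rightarrow> ('a \<Rightarrow> 'a \<Rightarrow> bool) \<Rightarrow> 'a \<Rightarrow> 'a list set" where
  "wgen S comm s = wcls S comm [s]"

definition wlen :: "'a list set \<Rightarrow> nat" where
  "wlen u = (LEAST n. \<exists>xs\<in>u. length xs = n)"

definition is_clique :: "'a set \<Rightarrow> ('a \<Rightarrow> 'a \<Rightarrow> bool) \<Rightarrow> 'a set \<Rightarrow> bool" where
  "is_clique S comm C \<longleftrightarrow> C \<subseteq> S \<and> (\<forall>s\<in>C. \<forall>t\<in>C. s \<noteq> t \<longrightarrow> comm s t)"

definition clique_prod :: "'a set \<Rightarrow> ('a \<Rightarrow> 'a \<Rightarrow> bool) \<Rightarrow> 'a set \<Rightarrow> 'a list set" where
  "clique_prod S comm C = wcls S comm (SOME xs. distinct xs \<and> set xs = C)"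

text \<open>Vectors of L^2(M_q) are functions W \<Rightarrow> complex (coefficients w.r.t. the orthonormal
  basis T_w \<Omega>); operators below are given by their (finite-row) matrix formulas.\<close>

text \<open>Left multiplication by a generator T_s:
  T_s (T_v \<Omega>) = T_{sv} \<Omega> + [|sv| < |v|] p T_v \<Omega>.\<close>
definition hecke_gen ::
  "'a set \<Rightarrow> ('a \<Rightarrow> 'a \<Rightarrow> bool) \<Rightarrow> real \<Rightarrow> 'a \<Rightarrow> ('a list set \<Rightarrow> complex) \<Rightarrow> ('a list set \<Rightarrow> complex)"
  where
  "hecke_gen S comm p s \<xi> u =
     \<xi> (wmul S comm (wgen S comm s) u)
     + (if wlen (wmul S comm (wgen S comm s) u) < wlen u then complex_of_real p * \<xi> u else 0)"

definition hecke_op ::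
  "'a set \<Rightarrow> ('a \<Rightarrow> 'a \<Rightarrow> bool) \<Rightarrow> real \<Rightarrow> 'a list set \<Rightarrow> ('a list set \<Rightarrow> complex) \<Rightarrow> ('a list set \<Rightarrow> complex)"
  where
  "hecke_op S comm p w =
     foldr (\<lambda>s f. hecke_gen S comm p s \<circ> f) (SOME xs. xs \<in> w \<and> length xs = wlen w) id"

text \<open>The unitary T^{(1)}_v : T_w \<Omega> \<mapsto> T_{vw} \<Omega>.\<close>
definition shift_op ::
  "'a set \<Rightarrow> ('a \<Rightarrow> 'a \<Rightarrow> bool) \<Rightarrow> 'a list set \<Rightarrow> ('a list set \<Rightarrow> complex) \<Rightarrow> ('a list set \<Rightarrow> complex)"
  where
  "shift_op S comm v \<xi> x = \<xi> (wmul S comm (winv v) x)"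

definition proj_op ::
  "'a set \<Rightarrow> ('a \<Rightarrow> 'a \<Rightarrow> bool) \<Rightarrow> 'a list set \<Rightarrow> ('a list set \<Rightarrow> complex) \<Rightarrow> ('a list set \<Rightarrow> complex)"
  where
  "proj_op S comm u \<xi> x =
     (if int (wlen (wmul S comm (winv u) x)) = int (wlen x) - int (wlen u) then \<xi> x else 0)"

definition A_set ::
  "'a set \<Rightarrow> ('a \<Rightarrow> 'a \<Rightarrow> bool) \<Rightarrow> 'a list set \<Rightarrow> ('a list set \<times> 'a set \<times> 'a list set) set"
  where
  "A_set S comm w = {(w', C, w''). w' \<in> cox_group S comm \<and> w'' \<in> cox_group S comm \<and>
      is_clique S comm C \<and>
      w = wmul S comm (wmul S comm w' (clique_prod S comm C)) w'' \<and>
      wlen w = wlen w' + wlen (clique_prod S comm C) + wlen w'' \<and>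
      (\<forall>s\<in>S. (\<forall>t\<in>C. wmul S comm (wgen S comm s) (wgen S comm t)
                     = wmul S comm (wgen S comm t) (wgen S comm s))
              \<longrightarrow> wlen w' < wlen (wmul S comm w' (wgen S comm s)))}"

end

theory Submission imports Defs begin

fun cnc :: "('a \<Rightarrow> 'a \<Rightarrow> bool) \<Rightarrow> 'a \<Rightarrow> 'a list \<Rightarrow> 'a list option" where
  "cnc c s [] = None"
| "cnc c s (x#xs) = (if x = s then Some xs else if c x s then map_option (Cons x) (cnc c s xs) else None)"

definition lmul where "lmul c s r = (case cnc c s r of Some r' \<Rightarrow> r' | None \<Rightarrow> s # r)"
definition red where "red c xs = foldr (lmul c) xs []"
fun reduced where "reduced c [] = True" | "reduced c (x#r) = (reduced c r \<and> cnc c x r = None)"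
definition dep where "dep c a b = (a = b \<or> \<not> c a b)"
definition key where "key c r = (\<lambda>a b. if dep c a b then filter (\<lambda>x. x = a \<or> x = b) r else [])"
definition desc where "desc c s K = (\<forall>b. dep c s b \<longrightarrow> K s b \<noteq> [] \<and> hd (K s b) = s)"
definition Fk where "Fk c s K = (\<lambda>a b. if dep c a b \<and> (a = s \<or> b = s) then (if desc c s K then tl (K a b) else s # K a b) else K a b)"

lemma cnc_append:
  "cnc c s (u @ v) = (case cnc c s u of Some u' \<Rightarrow> Some (u' @ v)
     | None \<Rightarrow> if (\<forall>x\<in>set u. x \<noteq> s \<and> c x s) then map_option (\<lambda>v'. u @ v') (cnc c s v) else None)"
proof (induction u)
  case Nil show ?case by (cases "cnc c s v") auto
next
  case (Cons a u) then show ?case by (cases "cnc c s v"; auto split: option.splits)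
qed

lemma cnc_Some_decomp:
  "cnc c s r = Some r' \<Longrightarrow> \<exists>pre post. r = pre @ s # post \<and> r' = pre @ post \<and> (\<forall>x\<in>set pre. x \<noteq> s \<and> c x s)"
proof (induction r arbitrary: r')
  case Nil then show ?case by simp
next
  case (Cons x xs)
  show ?case
  proof (cases "x = s")
    case True then show ?thesis using Cons.prems by (intro exI[of _ "[]"] exI[of _ xs]) auto
  next
    case False
    with Cons.prems obtain r'' where "c x s" "cnc c s xs = Some r''" "r' = x # r''"
      by (auto split: if_splits)
    with Cons.IH obtain pre post where "xs = pre @ s # post" "r'' = pre @ post" "\<forall>x\<in>set pre. x \<noteq> s \<and> c x s" by blast
    then show ?thesis using False \<open>c x s\<close> \<open>r' = x # r''\<close> by (intro exI[of _ "x # pre"] exI[of _ post]) auto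
  qed
qed

lemma cnc_pre: "(\<forall>x\<in>set pre. x \<noteq> s \<and> c x s) \<Longrightarrow> cnc c s (pre @ s # post) = Some (pre @ post)"
  by (induction pre) auto

lemma cnc_length: "cnc c s r = Some r' \<Longrightarrow> length r = Suc (length r')"
  using cnc_Some_decomp by fastforce

lemma cnc_set: "cnc c s r = Some r' \<Longrightarrow> set r' \<subseteq> set r"
  using cnc_Some_decomp by fastforce

lemma cnc_set2: "cnc c s r = Some r' \<Longrightarrow> set r \<subseteq> insert s (set r')"
  using cnc_Some_decomp by fastforce

lemma cnc_mem: "cnc c s r \<noteq> None \<Longrightarrow> s \<in> set r"
  using cnc_Some_decomp by fastforce


lemma cnc_app_None: "cnc c s r1 = None \<Longrightarrow> cnc c s (r1 @ r2) \<noteq> None \<Longrightarrow>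
    (\<forall>x\<in>set r1. x \<noteq> s \<and> c x s) \<and> cnc c s r2 \<noteq> None"
  by (auto simp: cnc_append split: if_splits)

lemma cnc_app_comm: "\<forall>x\<in>set r1. x \<noteq> s \<and> c x s \<Longrightarrow> (cnc c s (r1 @ r2) = None \<longleftrightarrow> cnc c s r2 = None)"
proof -
  assume a: "\<forall>x\<in>set r1. x \<noteq> s \<and> c x s"
  then have "cnc c s r1 = None" using cnc_mem by fastforce
  then show ?thesis using a by (auto simp: cnc_append)
qed

lemma cnc_app_Some: "cnc c s r1 = Some r1' \<Longrightarrow> cnc c s (r1 @ r2) = Some (r1' @ r2)"
  by (simp add: cnc_append)

lemma cnc_app_Some2: "\<forall>x\<in>set r1. x \<noteq> s \<and> c x s \<Longrightarrow> cnc c s r2 = Some r2' \<Longrightarrow> cnc c s (r1 @ r2) = Some (r1 @ r2')"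
proof -
  assume a: "\<forall>x\<in>set r1. x \<noteq> s \<and> c x s" "cnc c s r2 = Some r2'"
  then have "cnc c s r1 = None" using cnc_mem by fastforce
  then show ?thesis using a by (auto simp: cnc_append)
qed

lemma cnc_Cons_comm: "s \<noteq> t \<Longrightarrow> c s t \<Longrightarrow> cnc c t (s # r) = map_option (Cons s) (cnc c t r)"
  by simp

lemma reduced_distinct: "distinct cl \<Longrightarrow> reduced c cl"
  by (induction cl) (auto dest: cnc_mem)

lemma reduced_app:
  assumes "reduced c r1" "reduced c r2" "\<forall>a. cnc c a (rev r1) \<noteq> None \<longrightarrow> cnc c a r2 = None"
  shows "reduced c (r1 @ r2)"
  using assms
proof (induction r1)
  case Nil then show ?case by simp
next
  case (Cons x r1)
  have h: "\<forall>a. cnc c a (rev r1) \<noteq> None \<longrightarrow> cnc c a r2 = None"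
  proof (intro allI impI)
    fix a assume "cnc c a (rev r1) \<noteq> None"
    then obtain u where "cnc c a (rev r1) = Some u" by auto
    then have "cnc c a (rev (x # r1)) \<noteq> None" using cnc_app_Some[of c a "rev r1" u "[x]"] by simp
    then show "cnc c a r2 = None" using Cons.prems(3) by blast
  qed
  have r1: "reduced c (r1 @ r2)" using Cons h by simp
  have n: "cnc c x r1 = None" using Cons.prems(1) by simp
  have "cnc c x (r1 @ r2) = None"
  proof (rule ccontr)
    assume "cnc c x (r1 @ r2) \<noteq> None"
    from cnc_app_None[OF n this] have ac: "\<forall>y\<in>set r1. y \<noteq> x \<and> c y x" and "cnc c x r2 \<noteq> None" by auto
    have "cnc c x (rev r1 @ [x]) = Some (rev r1)"
      using cnc_pre[of "rev r1" x c "[]"] ac by simp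
    then have "cnc c x (rev (x # r1)) \<noteq> None" by simp
    then have "cnc c x r2 = None" by (rule mp[OF spec[OF Cons.prems(3), of x]])
    then show False using \<open>cnc c x r2 \<noteq> None\<close> by simp
  qed
  then show ?case using r1 by simp
qed

locale symc =
  fixes c :: "'a \<Rightarrow> 'a \<Rightarrow> bool"
  assumes csym: "c a b \<Longrightarrow> c b a"
begin

lemma dep_sym: "dep c a b = dep c b a"
  using csym unfolding dep_def by blast

lemma key_sym: "key c r a b = key c r b a"
  unfolding key_def by (auto simp: dep_sym intro!: filter_cong)

lemma key_cnc: "(cnc c s r \<noteq> None) = desc c s (key c r)"
proof (induction r)
  case Nil
  then show ?case by (auto simp: desc_def key_def dep_def)
next
  case (Cons x xs)
  show ?case
  proof (cases "x = s")
    case True then show ?thesis by (auto simp: desc_def key_def)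
  next
    case False
    show ?thesis
    proof (cases "c x s")
      case True
      have "key c (x#xs) s b = key c xs s b" if "dep c s b" for b
        using that True False csym by (auto simp: key_def dep_def)
      then have "desc c s (key c (x#xs)) = desc c s (key c xs)"
        unfolding desc_def by auto
      then show ?thesis using Cons True False by simp
    next
      case nc: False
      have "dep c s x" using nc csym by (auto simp: dep_def)
      then have "key c (x#xs) s x = x # filter (\<lambda>y. y = s \<or> y = x) xs" by (simp add: key_def)
      then have "\<not> desc c s (key c (x#xs))" using \<open>dep c s x\<close> False unfolding desc_def by force
      then show ?thesis using False nc by simp
    qed
  qed
qed

lemma key_cnc_Some:
  assumes "cnc c s r = Some r'"
  shows "key c r' = (\<lambda>a b. if dep c a b \<and> (a = s \<or> b = s) then tl (key c r a b) else key c r a b)"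
proof -
  obtain pre post where d: "r = pre @ s # post" "r' = pre @ post" "\<forall>x\<in>set pre. x \<noteq> s \<and> c x s"
    using cnc_Some_decomp[OF assms] by blast
  have f0: "filter (\<lambda>x. x = a \<or> x = b) pre = []" if "dep c a b" "a = s \<or> b = s" for a b
    using that d(3) csym unfolding dep_def by (auto simp: filter_empty_conv)
  show ?thesis
    using d f0 by (auto simp: key_def fun_eq_iff)
qed

lemma key_lmul: "key c (lmul c s r) = Fk c s (key c r)"
proof (cases "cnc c s r")
  case None
  then have nd: "\<not> desc c s (key c r)" using key_cnc[of s r] by simp
  show ?thesis unfolding lmul_def Fk_def using None nd by (simp add: key_def fun_eq_iff)
next
  case (Some r')
  then have "desc c s (key c r)" using key_cnc by auto
  then show ?thesis using Some key_cnc_Some[OF Some] by (auto simp: lmul_def Fk_def fun_eq_iff)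
qed

lemma key_swap:
  assumes "c x y" "x \<noteq> y"
  shows "key c (u @ [x, y] @ v) = key c (u @ [y, x] @ v)"
  using assms csym by (auto simp: key_def fun_eq_iff dep_def)

lemma Fk_comm:
  assumes "c s t" "s \<noteq> t"
  shows "Fk c s (Fk c t K) = Fk c t (Fk c s K)"
proof -
  have nd: "\<not> dep c s t" "\<not> dep c t s" using assms csym by (auto simp: dep_def)
  have d1: "desc c s (Fk c t K) = desc c s K"
    unfolding desc_def Fk_def using nd assms by auto
  have d2: "desc c t (Fk c s K) = desc c t K"
    unfolding desc_def Fk_def using nd assms by auto
  show ?thesis unfolding Fk_def d1[unfolded Fk_def] d2[unfolded Fk_def]
    using nd by (auto simp: fun_eq_iff)
qed

end


lemma red_Cons: "red c (x # xs) = lmul c x (red c xs)"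
  by (simp add: red_def)

lemma red_append: "red c (a @ b) = foldr (lmul c) a (red c b)"
  by (simp add: red_def)

lemma red_reduced_id: "reduced c r \<Longrightarrow> red c r = r"
  by (induction r) (auto simp: red_def lmul_def)

lemma length_lmul: "length (lmul c s r) = Suc (length r) \<or> Suc (length (lmul c s r)) = length r"
  by (auto simp: lmul_def cnc_length split: option.splits)

lemma length_red_le: "length (red c xs) \<le> length xs"
proof (induction xs)
  case (Cons x xs) then show ?case using length_lmul[of c x "red c xs"] by (auto simp: red_Cons)
qed (simp add: red_def)

lemma not_reduced_red: "\<not> reduced c xs \<Longrightarrow> length (red c xs) < length xs"
proof (induction xs)
  case Nil then show ?case by simp
next
  case (Cons x xs)
  show ?case
  proof (cases "reduced c xs")
    case True
    then obtain r' where "cnc c x xs = Some r'" using Cons.prems by auto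
    then show ?thesis using True by (simp add: red_Cons red_reduced_id lmul_def cnc_length)
  next
    case False
    then show ?thesis using Cons.IH length_lmul[of c x "red c xs"] by (auto simp: red_Cons)
  qed
qed

lemma set_lmul: "set (lmul c s r) \<subseteq> insert s (set r)"
  by (auto simp: lmul_def dest: cnc_set split: option.splits)

lemma set_red: "set (red c xs) \<subseteq> set xs"
  by (induction xs) (auto simp: red_def dest!: set_lmul[THEN subsetD])

context symc
begin

lemma cnc_None_del:
  assumes "cnc c s xs = Some xs'" "x \<noteq> s" "c x s" "cnc c x xs = None"
  shows "cnc c x xs' = None"
proof -
  have "c s x" using assms(3) csym by blast
  obtain pre post where d: "xs = pre @ s # post" "xs' = pre @ post" "\<forall>y\<in>set pre. y \<noteq> s \<and> c y s"
    using cnc_Some_decomp[OF assms(1)] by blast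
  show ?thesis using assms(2-4) \<open>c s x\<close> unfolding d
    by (auto simp: cnc_append split: option.splits if_splits)
qed

lemma reduced_cnc:
  "cnc c s r = Some r' \<Longrightarrow> reduced c r \<Longrightarrow> reduced c r' \<and> cnc c s r' = None"
proof (induction r arbitrary: r')
  case Nil then show ?case by simp
next
  case (Cons x xs)
  show ?case
  proof (cases "x = s")
    case True then show ?thesis using Cons.prems by auto
  next
    case False
    with Cons.prems obtain r'' where h: "c x s" "cnc c s xs = Some r''" "r' = x # r''"
      by (auto split: if_splits)
    have "reduced c r'' \<and> cnc c s r'' = None" using Cons.IH[OF h(2)] Cons.prems by simp
    moreover have "cnc c x r'' = None" using cnc_None_del[OF h(2) False h(1)] Cons.prems by simp
    ultimately show ?thesis using h False by simp
  qed
qed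

lemma reduced_lmul: "reduced c r \<Longrightarrow> reduced c (lmul c s r)"
  using reduced_cnc[of s r] by (auto simp: lmul_def split: option.splits)

lemma reduced_red: "reduced c (red c xs)"
  by (induction xs) (auto simp: red_def reduced_lmul)


lemma key_lmul_lmul:
  assumes "reduced c r"
  shows "key c (lmul c s (lmul c s r)) = key c r"
proof (cases "cnc c s r")
  case None
  then show ?thesis by (simp add: lmul_def)
next
  case (Some r')
  from reduced_cnc[OF Some assms] have n: "cnc c s r' = None" by simp
  have ds: "desc c s (key c r)" using key_cnc[of s r] Some by simp
  have "key c (s # r') = key c r"
  proof (rule ext, rule ext)
    fix a b
    show "key c (s # r') a b = key c r a b"
    proof (cases "dep c a b \<and> (a = s \<or> b = s)")
      case True
      have "key c r a b = key c r s (if a = s then b else a)" using True key_sym[of r a b] by (cases "a = s") simp_all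
      moreover have "dep c s (if a = s then b else a)" using True dep_sym by auto
      ultimately have "key c r a b \<noteq> [] \<and> hd (key c r a b) = s" using ds unfolding desc_def by auto
      then have "key c r a b = s # tl (key c r a b)" by (cases "key c r a b") auto
      moreover have "key c (s # r') a b = s # key c r' a b" using True by (auto simp: key_def)
      ultimately show ?thesis using key_cnc_Some[OF Some] True by simp
    next
      case False
      have "key c r' a b = key c r a b" using key_cnc_Some[OF Some] False by (simp only: if_False)
      moreover have "key c (s#r') a b = key c r' a b" using False by (auto simp: key_def)
      ultimately show ?thesis by simp
    qed
  qed
  then show ?thesis using Some n by (simp add: lmul_def)
qed

lemma key_foldr_cong: "key c r1 = key c r2 \<Longrightarrow> key c (foldr (lmul c) a r1) = key c (foldr (lmul c) a r2)"
  by (induction a) (auto simp: key_lmul)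

end

locale racg = symc comm for comm :: "'a \<Rightarrow> 'a \<Rightarrow> bool" +
  fixes S :: "'a set"
  assumes finS: "finite S"
begin

abbreviation E where "E \<equiv> equivclp (cstep S comm)"

lemma key_cstep: "cstep S comm xs ys \<Longrightarrow> key comm (red comm xs) = key comm (red comm ys)"
proof (induction rule: cstep.induct)
  case (del s xs ys)
  have "key comm (lmul comm s (lmul comm s (red comm ys))) = key comm (red comm ys)"
    by (rule key_lmul_lmul[OF reduced_red])
  then have "key comm (foldr (lmul comm) xs (lmul comm s (lmul comm s (red comm ys)))) = key comm (foldr (lmul comm) xs (red comm ys))"
    by (rule key_foldr_cong)
  then show ?case unfolding red_append by simp
next
  case (swap s t xs ys)
  have "key comm (lmul comm s (lmul comm t (red comm ys))) = key comm (lmul comm t (lmul comm s (red comm ys)))"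
    unfolding key_lmul using Fk_comm[of s t] swap by metis
  then have "key comm (foldr (lmul comm) xs (lmul comm s (lmul comm t (red comm ys)))) = key comm (foldr (lmul comm) xs (lmul comm t (lmul comm s (red comm ys))))"
    by (rule key_foldr_cong)
  then show ?case unfolding red_append by simp
qed

lemma key_E: "E xs ys \<Longrightarrow> key comm (red comm xs) = key comm (red comm ys)"
proof (induction rule: equivclp_induct)
  case base then show ?case by simp
next
  case (step y z) then show ?case using key_cstep by metis
qed

lemma cstep_lists: "cstep S comm xs ys \<Longrightarrow> set xs \<subseteq> S \<longleftrightarrow> set ys \<subseteq> S"
  by (induction rule: cstep.induct) auto

lemma E_lists: "E xs ys \<Longrightarrow> set xs \<subseteq> S \<longleftrightarrow> set ys \<subseteq> S"
  by (induction rule: equivclp_induct) (auto dest: cstep_lists)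

lemma cstep_ctx: "cstep S comm xs ys \<Longrightarrow> cstep S comm (a @ xs @ b) (a @ ys @ b)"
proof (induction rule: cstep.induct)
  case (del s xs ys) then show ?case using cstep.del[of s S comm "a @ xs" "ys @ b"] by simp
next
  case (swap s t xs ys) then show ?case using cstep.swap[of s S t comm "a @ xs" "ys @ b"] by simp
qed

lemma E_ctx: "E xs ys \<Longrightarrow> E (a @ xs @ b) (a @ ys @ b)"
proof (induction rule: equivclp_induct)
  case base then show ?case by simp
next
  case (step y z) then show ?case
    by (meson cstep_ctx equivclp_into_equivclp)
qed

lemma E_app: "E xs ys \<Longrightarrow> E us vs \<Longrightarrow> E (xs @ us) (ys @ vs)"
  using E_ctx[of xs ys "[]" us] E_ctx[of us vs ys "[]"] by (auto intro: equivclp_trans)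

lemma cstep_rev: "cstep S comm xs ys \<Longrightarrow> cstep S comm (rev xs) (rev ys)"
proof (induction rule: cstep.induct)
  case (del s xs ys) then show ?case using cstep.del[of s S comm "rev ys" "rev xs"] by simp
next
  case (swap s t xs ys) then show ?case using cstep.swap[of t S s comm "rev ys" "rev xs"] csym by simp
qed

lemma E_rev: "E xs ys \<Longrightarrow> E (rev xs) (rev ys)"
proof (induction rule: equivclp_induct)
  case base then show ?case by simp
next
  case (step y z) then show ?case
    by (meson cstep_rev equivclp_into_equivclp)
qed

lemma E_move:
  "s \<in> S \<Longrightarrow> set pre \<subseteq> S \<Longrightarrow> \<forall>x\<in>set pre. x \<noteq> s \<and> comm x s \<Longrightarrow> E (s # pre @ v) (pre @ s # v)"
proof (induction pre)
  case Nil then show ?case by simp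
next
  case (Cons x pre)
  have "cstep S comm ([] @ [s, x] @ pre @ v) ([] @ [x, s] @ pre @ v)"
    using Cons.prems csym by (intro cstep.swap) auto
  then have "E (s # x # pre @ v) (x # s # pre @ v)" by auto
  moreover have "E (x # s # pre @ v) (x # pre @ s # v)"
    using E_ctx[OF Cons.IH, of "[x]" "[]"] Cons.prems by simp
  ultimately show ?case by (auto intro: equivclp_trans)
qed

lemma E_cnc: "cnc comm s r = Some r' \<Longrightarrow> s \<in> S \<Longrightarrow> set r \<subseteq> S \<Longrightarrow> E (s # r) r'"
proof -
  assume a: "cnc comm s r = Some r'" "s \<in> S" "set r \<subseteq> S"
  obtain pre post where d: "r = pre @ s # post" "r' = pre @ post" "\<forall>x\<in>set pre. x \<noteq> s \<and> comm x s"
    using cnc_Some_decomp[OF a(1)] by blast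
  have "E (s # pre @ s # post) (pre @ s # s # post)" using E_move[of s pre "s # post"] a d by auto
  moreover have "cstep S comm (pre @ [s, s] @ post) (pre @ post)" using a by (intro cstep.del)
  ultimately show ?thesis unfolding d by (auto intro: equivclp_trans)
qed

lemma E_lmul: "s \<in> S \<Longrightarrow> set r \<subseteq> S \<Longrightarrow> E (lmul comm s r) (s # r)"
proof -
  assume a: "s \<in> S" "set r \<subseteq> S"
  show ?thesis
  proof (cases "cnc comm s r")
    case None then show ?thesis by (simp add: lmul_def)
  next
    case (Some r') then show ?thesis using E_cnc[OF Some a] by (simp add: lmul_def equivclp_sym)
  qed
qed

lemma E_red: "set xs \<subseteq> S \<Longrightarrow> E (red comm xs) xs"
proof (induction xs)
  case Nil then show ?case by (simp add: red_def)
next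
  case (Cons x xs)
  have "set (red comm xs) \<subseteq> S" using set_red Cons.prems by fastforce
  then have "E (lmul comm x (red comm xs)) (x # red comm xs)" using E_lmul Cons.prems by simp
  moreover have "E (x # red comm xs) (x # xs)" using E_ctx[OF Cons.IH, of "[x]" "[]"] Cons.prems by simp
  ultimately show ?case by (auto simp: red_Cons intro: equivclp_trans)
qed

lemma length_key: "set r \<subseteq> S \<Longrightarrow> length r = (\<Sum>a\<in>S. length (key comm r a a))"
proof -
  assume "set r \<subseteq> S"
  then have "length r = sum (count_list r) S" using sum_count_set finS by metis
  also have "\<dots> = (\<Sum>a\<in>S. length (key comm r a a))"
    by (intro sum.cong refl) (simp add: key_def dep_def count_list_eq_length_filter eq_commute)
  finally show ?thesis .
qed

lemma length_red_E: "E xs ys \<Longrightarrow> set xs \<subseteq> S \<Longrightarrow> length (red comm xs) = length (red comm ys)"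
proof -
  assume a: "E xs ys" "set xs \<subseteq> S"
  then have "set ys \<subseteq> S" using E_lists by blast
  then show ?thesis using a length_key[of "red comm xs"] length_key[of "red comm ys"] key_E[OF a(1)]
      set_red[of comm xs] set_red[of comm ys] by auto
qed


abbreviation W where "W xs \<equiv> wcls S comm xs"
abbreviation L where "L xs \<equiv> wlen (W xs)"
abbreviation G where "G \<equiv> cox_group S comm"

lemma mem_W: "ys \<in> W xs \<longleftrightarrow> E xs ys"
  by (simp add: wcls_def)

lemma W_eq: "W xs = W ys \<longleftrightarrow> E xs ys"
proof
  assume "W xs = W ys"
  then show "E xs ys" using mem_W[of ys ys] mem_W[of ys xs] by simp
next
  assume "E xs ys"
  then show "W xs = W ys" unfolding wcls_def
    by (auto intro: equivclp_trans equivclp_sym)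
qed

lemma wmul_W: "wmul S comm (W a) (W b) = W (a @ b)"
proof (rule set_eqI)
  fix zs
  show "zs \<in> wmul S comm (W a) (W b) \<longleftrightarrow> zs \<in> W (a @ b)"
  proof
    assume "zs \<in> wmul S comm (W a) (W b)"
    then obtain xs ys where "E a xs" "E b ys" "E (xs @ ys) zs"
      unfolding wmul_def by (auto simp: mem_W)
    then show "zs \<in> W (a @ b)" unfolding mem_W by (meson E_app equivclp_trans)
  next
    assume "zs \<in> W (a @ b)"
    then have e: "E (a @ b) zs" using mem_W by blast
    have ab: "a \<in> W a" "b \<in> W b" by (auto simp: mem_W)
    show "zs \<in> wmul S comm (W a) (W b)" unfolding wmul_def using e ab by blast
  qed
qed

lemma winv_W: "winv (W a) = W (rev a)"
proof (rule set_eqI)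
  fix zs
  show "zs \<in> winv (W a) \<longleftrightarrow> zs \<in> W (rev a)"
  proof
    assume "zs \<in> winv (W a)"
    then show "zs \<in> W (rev a)" unfolding winv_def by (auto simp: mem_W dest: E_rev)
  next
    assume "zs \<in> W (rev a)"
    then have "E (rev (rev a)) (rev zs)" unfolding mem_W by (rule E_rev)
    then have "rev zs \<in> W a" unfolding mem_W by simp
    then have "rev (rev zs) \<in> rev ` W a" by (rule imageI)
    then show "zs \<in> winv (W a)" unfolding winv_def by simp
  qed
qed

lemma wgen_W: "wgen S comm s = W [s]" by (simp add: wgen_def)
lemma wunit_W: "wunit S comm = W []" by (simp add: wunit_def)

lemma G_iff: "u \<in> G \<longleftrightarrow> (\<exists>xs. set xs \<subseteq> S \<and> u = W xs)"
  unfolding cox_group_def by (auto simp: in_lists_conv_set)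

lemma L_red: "set xs \<subseteq> S \<Longrightarrow> L xs = length (red comm xs)"
  unfolding wlen_def
proof (rule Least_equality)
  assume "set xs \<subseteq> S"
  then have "red comm xs \<in> W xs" using E_red[of xs] mem_W equivclp_sym by metis
  then show "\<exists>ys\<in>W xs. length ys = length (red comm xs)" by blast
next
  fix n assume a: "set xs \<subseteq> S" "\<exists>ys\<in>W xs. length ys = n"
  then obtain ys where "E xs ys" "length ys = n" by (auto simp: mem_W)
  then show "length (red comm xs) \<le> n"
    using length_red_E[of xs ys] a length_red_le[of comm ys] by simp
qed

lemma L_E: "E xs ys \<Longrightarrow> L xs = L ys"
proof -
  assume "E xs ys"
  then have "W xs = W ys" using W_eq by blast
  then show ?thesis by simp
qed

lemma L_le: "set xs \<subseteq> S \<Longrightarrow> L xs \<le> length xs"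
  using L_red length_red_le by metis

lemma L_reduced: "set r \<subseteq> S \<Longrightarrow> reduced comm r \<Longrightarrow> L r = length r"
  using L_red red_reduced_id by metis

lemma reduced_L: "set r \<subseteq> S \<Longrightarrow> L r = length r \<Longrightarrow> reduced comm r"
  using L_red not_reduced_red by fastforce

lemma red_set: "set xs \<subseteq> S \<Longrightarrow> set (red comm xs) \<subseteq> S"
  using set_red by fastforce

lemma L_Cons_pm: "set xs \<subseteq> S \<Longrightarrow> s \<in> S \<Longrightarrow> L (s # xs) = Suc (L xs) \<or> Suc (L (s # xs)) = L xs"
  using L_red[of xs] L_red[of "s # xs"] length_lmul[of comm s "red comm xs"] by (simp add: red_Cons)

lemma L_app_le: "set a \<subseteq> S \<Longrightarrow> set b \<subseteq> S \<Longrightarrow> L (a @ b) \<le> L a + L b"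
proof -
  assume a: "set a \<subseteq> S" "set b \<subseteq> S"
  have "E (a @ b) (red comm a @ red comm b)"
    using E_app[OF equivclp_sym[OF E_red] equivclp_sym[OF E_red]] a by blast
  then have "L (a @ b) = L (red comm a @ red comm b)" by (rule L_E)
  also have "\<dots> \<le> length (red comm a @ red comm b)" using L_le[of "red comm a @ red comm b"] red_set[of a] red_set[of b] a by simp
  finally show ?thesis using L_red a by simp
qed

lemma L_rev_le: "set xs \<subseteq> S \<Longrightarrow> L (rev xs) \<le> L xs"
proof -
  assume a: "set xs \<subseteq> S"
  have "L (rev xs) = L (rev (red comm xs))" using E_rev[OF E_red[OF a]] L_E by metis
  also have "\<dots> \<le> length (red comm xs)" using L_le[of "rev (red comm xs)"] red_set[of xs] a by simp
  finally show ?thesis using L_red a by simp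
qed

lemma L_rev: "set xs \<subseteq> S \<Longrightarrow> L (rev xs) = L xs"
  using L_rev_le[of xs] L_rev_le[of "rev xs"] by simp

lemma ex_red: "u \<in> G \<Longrightarrow> \<exists>r. set r \<subseteq> S \<and> reduced comm r \<and> u = W r"
proof -
  assume "u \<in> G"
  then obtain xs where "set xs \<subseteq> S" "u = W xs" using G_iff by blast
  moreover have "W (red comm xs) = W xs" using E_red[of xs] W_eq \<open>set xs \<subseteq> S\<close> by blast
  ultimately show ?thesis using reduced_red[of xs] red_set[of xs] by metis
qed

lemma L_Cons_red: "s \<in> S \<Longrightarrow> set r \<subseteq> S \<Longrightarrow> reduced comm r \<Longrightarrow>
   L (s # r) = (case cnc comm s r of None \<Rightarrow> Suc (length r) | Some r' \<Rightarrow> length r')"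
  using L_red[of "s # r"] by (simp add: red_Cons red_reduced_id lmul_def split: option.splits)

lemma L_desc: "s \<in> S \<Longrightarrow> set r \<subseteq> S \<Longrightarrow> reduced comm r \<Longrightarrow>
   (L (s # r) < L r \<longleftrightarrow> cnc comm s r \<noteq> None)"
proof -
  assume a: "s \<in> S" "set r \<subseteq> S" "reduced comm r"
  show ?thesis
  proof (cases "cnc comm s r")
    case None then show ?thesis using L_Cons_red[OF a] L_reduced[OF a(2,3)] by simp
  next
    case (Some r') then show ?thesis using L_Cons_red[OF a] L_reduced[OF a(2,3)] cnc_length[OF Some] by simp
  qed
qed

lemma L_asc: "s \<in> S \<Longrightarrow> set r \<subseteq> S \<Longrightarrow> reduced comm r \<Longrightarrow>
   (L (s # r) = Suc (L r) \<longleftrightarrow> cnc comm s r = None)"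
proof -
  assume a: "s \<in> S" "set r \<subseteq> S" "reduced comm r"
  show ?thesis
  proof (cases "cnc comm s r")
    case None then show ?thesis using L_Cons_red[OF a] L_reduced[OF a(2,3)] by simp
  next
    case (Some r') then show ?thesis using L_Cons_red[OF a] L_reduced[OF a(2,3)] cnc_length[OF Some] by simp
  qed
qed


lemma desc_comm_aux: "cnc comm a r \<noteq> None \<Longrightarrow> cnc comm b r \<noteq> None \<Longrightarrow> a \<noteq> b \<Longrightarrow> comm a b"
proof (induction r)
  case Nil then show ?case by simp
next
  case (Cons x r)
  show ?case
  proof (cases "x = a")
    case True then show ?thesis using Cons.prems by (auto split: if_splits)
  next
    case False
    show ?thesis
    proof (cases "x = b")
      case True then show ?thesis using Cons.prems False csym by (auto split: if_splits)
    next
      case False2: False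
      then show ?thesis using Cons False by (auto split: if_splits)
    qed
  qed
qed

lemma Zchar: "s \<in> S \<Longrightarrow> t \<in> S \<Longrightarrow> (W [s, t] = W [t, s]) \<longleftrightarrow> (s = t \<or> comm s t)"
proof
  assume a: "s \<in> S" "t \<in> S" "W [s, t] = W [t, s]"
  show "s = t \<or> comm s t"
  proof (rule ccontr)
    assume n: "\<not> (s = t \<or> comm s t)"
    then have n2: "\<not> comm t s" using csym by blast
    have "E [s, t] [t, s]" using a W_eq by blast
    then have k: "key comm (red comm [s, t]) = key comm (red comm [t, s])" by (rule key_E)
    have "red comm [s, t] = [s, t]" using n n2 by (auto simp: red_def lmul_def)
    moreover have "red comm [t, s] = [t, s]" using n n2 by (auto simp: red_def lmul_def)
    ultimately have "key comm [s, t] s t = key comm [t, s] s t" using k by simp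
    then show False using n by (simp add: key_def dep_def)
  qed
next
  assume a: "s \<in> S" "t \<in> S" "s = t \<or> comm s t"
  show "W [s, t] = W [t, s]"
  proof (cases "s = t")
    case True then show ?thesis by simp
  next
    case False
    then have "cstep S comm ([] @ [s, t] @ []) ([] @ [t, s] @ [])" using a by (intro cstep.swap) auto
    then show ?thesis using W_eq by auto
  qed
qed

lemma E_ss: "s \<in> S \<Longrightarrow> E (s # s # r) r"
  using cstep.del[of s S comm "[]" r] by auto

lemma E_cancel: "set xs \<subseteq> S \<Longrightarrow> E (xs @ rev xs @ y) y"
proof (induction xs arbitrary: y)
  case Nil then show ?case by simp
next
  case (Cons x xs)
  have "E (xs @ rev xs @ (x # y)) (x # y)" using Cons by simp
  then have "E (x # xs @ rev xs @ (x # y)) (x # x # y)" using E_ctx[of _ _ "[x]" "[]"] by simp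
  moreover have "E (x # x # y) y" using E_ss Cons.prems by simp
  ultimately show ?case by (auto intro: equivclp_trans)
qed

lemma E_cancel2: "set xs \<subseteq> S \<Longrightarrow> E (rev xs @ xs @ y) y"
  using E_cancel[of "rev xs" y] by simp

lemma comm_of_W:
  assumes "s \<in> S" "set r \<subseteq> S" "reduced comm r" "cnc comm s r = None" "W (s # r) = W (r @ [s])"
  shows "\<forall>x\<in>set r. x \<noteq> s \<and> comm x s"
proof -
  have e: "E (s # r) (r @ [s])" using assms(5) W_eq by blast
  have "L (s # r) = Suc (length r)" using L_asc[OF assms(1-3)] assms(4) L_reduced[OF assms(2,3)] by simp
  then have "L (r @ [s]) = length (r @ [s])" using L_E[OF e] by simp
  then have red: "reduced comm (r @ [s])" using reduced_L[of "r @ [s]"] assms by simp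
  have "E (s # r @ [s]) (s # s # r)" using E_ctx[OF equivclp_sym[OF e], of "[s]" "[]"] by simp
  then have "E (s # r @ [s]) r" using E_ss[OF assms(1)] by (blast intro: equivclp_trans)
  then have "L (s # r @ [s]) < L (r @ [s])"
    using L_E L_reduced[OF assms(2,3)] \<open>L (r @ [s]) = length (r @ [s])\<close> by simp
  then have "cnc comm s (r @ [s]) \<noteq> None" using L_desc[of s "r @ [s]"] assms red by simp
  then show ?thesis using cnc_app_None[OF assms(4)] by blast
qed

abbreviation LD where "LD t z \<equiv> L (t # z) < L z"

lemma LD_E: "E z1 z2 \<Longrightarrow> LD t z1 \<longleftrightarrow> LD t z2"
  using L_E[of z1 z2] L_E[of "t # z1" "t # z2"] E_ctx[of z1 z2 "[t]" "[]"] by simp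

lemma LD_red: "set z \<subseteq> S \<Longrightarrow> t \<in> S \<Longrightarrow> LD t z \<longleftrightarrow> cnc comm t (red comm z) \<noteq> None"
proof -
  assume a: "set z \<subseteq> S" "t \<in> S"
  have "LD t z \<longleftrightarrow> LD t (red comm z)" using LD_E[OF E_red[OF a(1)]] by simp
  then show ?thesis using L_desc[OF a(2) red_set[OF a(1)] reduced_red] by simp
qed

lemma LD_reduced: "set z \<subseteq> S \<Longrightarrow> t \<in> S \<Longrightarrow> reduced comm z \<Longrightarrow> LD t z \<longleftrightarrow> cnc comm t z \<noteq> None"
  using L_desc by simp

lemma LD_comm:
  assumes "t \<in> S" "s \<in> S" "t \<noteq> s" "comm t s" "set z \<subseteq> S"
  shows "LD t (s # z) \<longleftrightarrow> LD t z"
proof -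
  define r where "r = red comm z"
  have r: "set r \<subseteq> S" "reduced comm r" "E r z" using red_set[OF assms(5)] reduced_red E_red[OF assms(5)] by (auto simp: r_def)
  have e1: "LD t (s # z) \<longleftrightarrow> LD t (s # r)" using LD_E[of "s # r" "s # z" t] E_ctx[OF r(3), of "[s]" "[]"] by simp
  have e2: "LD t z \<longleftrightarrow> LD t r" using LD_E[OF r(3)] by simp
  have cs: "comm s t" using assms(4) csym by blast
  show ?thesis
  proof (cases "cnc comm s r")
    case None
    then have "reduced comm (s # r)" using r by simp
    then have "LD t (s # r) \<longleftrightarrow> cnc comm t (s # r) \<noteq> None" using LD_reduced[of "s # r" t] r assms by simp
    also have "\<dots> \<longleftrightarrow> cnc comm t r \<noteq> None" using cs assms(3) by simp
    also have "\<dots> \<longleftrightarrow> LD t r" using LD_reduced[of r t] r assms by simp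
    finally show ?thesis using e1 e2 by simp
  next
    case (Some r')
    have r': "reduced comm r'" "cnc comm s r' = None" using reduced_cnc[OF Some r(2)] by auto
    have sr': "set r' \<subseteq> S" using cnc_set[OF Some] r by auto
    have es: "E (s # r) r'" using E_cnc[OF Some assms(2) r(1)] .
    have "E (s # r') (s # s # r)" using E_ctx[OF equivclp_sym[OF es], of "[s]" "[]"] by simp
    then have es2: "E (s # r') r" using E_ss[OF assms(2)] by (blast intro: equivclp_trans)
    have "LD t (s # r) \<longleftrightarrow> LD t r'" using LD_E[OF es] .
    also have "\<dots> \<longleftrightarrow> cnc comm t r' \<noteq> None" using LD_reduced[of r' t] r' sr' assms by simp
    also have "\<dots> \<longleftrightarrow> cnc comm t (s # r') \<noteq> None" using cs assms(3) by simp
    also have "\<dots> \<longleftrightarrow> LD t (s # r')" using LD_reduced[of "s # r'" t] r' sr' assms by simp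
    also have "\<dots> \<longleftrightarrow> LD t r" using LD_E[OF es2] .
    finally show ?thesis using e1 e2 by simp
  qed
qed

lemma L_Cons_ge: "set z \<subseteq> S \<Longrightarrow> s \<in> S \<Longrightarrow> L z \<le> Suc (L (s # z))"
  using L_Cons_pm[of z s] by auto

lemma L_revapp_ge: "set xs \<subseteq> S \<Longrightarrow> set z \<subseteq> S \<Longrightarrow> L z \<le> length xs + L (rev xs @ z)"
proof -
  assume a: "set xs \<subseteq> S" "set z \<subseteq> S"
  have "L z = L (xs @ rev xs @ z)" using L_E[OF E_cancel[OF a(1), of z]] by simp
  also have "\<dots> \<le> L xs + L (rev xs @ z)" using L_app_le[of xs "rev xs @ z"] a by simp
  also have "\<dots> \<le> length xs + L (rev xs @ z)" using L_le[OF a(1)] by simp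
  finally show ?thesis .
qed

lemma Q_char:
  assumes "distinct cl" "set cl \<subseteq> S" "\<forall>x\<in>set cl. \<forall>y\<in>set cl. x \<noteq> y \<longrightarrow> comm x y" "set z \<subseteq> S"
  shows "int (L (rev cl @ z)) = int (L z) - int (length cl) \<longleftrightarrow> (\<forall>t\<in>set cl. LD t z)"
  using assms
proof (induction cl arbitrary: z)
  case Nil then show ?case by simp
next
  case (Cons t cl)
  have tS: "t \<in> S" and clS: "set cl \<subseteq> S" using Cons.prems by auto
  have eq: "rev (t # cl) @ z = rev cl @ (t # z)" by simp
  have IH: "int (L (rev cl @ (t # z))) = int (L (t # z)) - int (length cl) \<longleftrightarrow> (\<forall>t'\<in>set cl. LD t' (t # z))"
    using Cons.IH[of "t # z"] Cons.prems by auto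
  have lc: "\<forall>t'\<in>set cl. LD t' (t # z) \<longleftrightarrow> LD t' z"
  proof
    fix t' assume "t' \<in> set cl"
    then have "t' \<noteq> t" "comm t' t" "t' \<in> S" using Cons.prems by auto
    then show "LD t' (t # z) \<longleftrightarrow> LD t' z" using LD_comm tS Cons.prems(4) by blast
  qed
  show ?case
  proof
    assume h: "int (L (rev (t # cl) @ z)) = int (L z) - int (length (t # cl))"
    have ge: "L (t # z) \<le> length cl + L (rev cl @ (t # z))" using L_revapp_ge[of cl "t # z"] clS tS Cons.prems by simp
    then have "L (t # z) < L z" using h eq by simp
    moreover then have "L (t # z) = L z - 1" using L_Cons_pm[of z t] tS Cons.prems by auto
    ultimately have "int (L (rev cl @ (t # z))) = int (L (t # z)) - int (length cl)" using h eq by simp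
    then show "\<forall>t'\<in>set (t # cl). LD t' z" using IH lc \<open>L (t # z) < L z\<close> by auto
  next
    assume h: "\<forall>t'\<in>set (t # cl). LD t' z"
    then have "LD t z" by simp
    then have l: "L (t # z) = L z - 1" using L_Cons_pm[of z t] tS Cons.prems by auto
    have "\<forall>t'\<in>set cl. LD t' (t # z)" using h lc by auto
    then have "int (L (rev cl @ (t # z))) = int (L (t # z)) - int (length cl)" using IH by simp
    then show "int (L (rev (t # cl) @ z)) = int (L z) - int (length (t # cl))" using l eq \<open>LD t z\<close> by simp
  qed
qed

lemma E_clique_perm:
  assumes "distinct cl1" "distinct cl2" "set cl1 = set cl2" "set cl1 \<subseteq> S"
    "\<forall>x\<in>set cl1. \<forall>y\<in>set cl1. x \<noteq> y \<longrightarrow> comm x y"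
  shows "E cl1 cl2"
  using assms
proof (induction cl1 arbitrary: cl2)
  case Nil then show ?case by simp
next
  case (Cons x xs)
  have xin: "x \<in> set cl2" using Cons.prems(3) by auto
  obtain pre post where d: "cl2 = pre @ x # post" using split_list[OF xin] by blast
  have px: "\<forall>y\<in>set pre. y \<noteq> x \<and> comm y x"
  proof
    fix y assume y: "y \<in> set pre"
    then have "y \<noteq> x" using Cons.prems(2) d by auto
    moreover have "y \<in> set (x # xs)" using y d Cons.prems(3) by simp
    ultimately show "y \<noteq> x \<and> comm y x" using Cons.prems(5) by simp
  qed
  have xS: "x \<in> S" and preS: "set pre \<subseteq> S" using Cons.prems(3,4) d by auto
  have e1: "E (x # pre @ post) (pre @ x # post)" using E_move[OF xS preS px] .
  have s1: "set xs = set cl2 - {x}" using Cons.prems(1,3) by auto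
  have s2: "set (pre @ post) = set cl2 - {x}" using Cons.prems(2) d by auto
  have "E xs (pre @ post)"
  proof (rule Cons.IH)
    show "distinct xs" using Cons.prems(1) by simp
    show "distinct (pre @ post)" using Cons.prems(2) d by simp
    show "set xs = set (pre @ post)" using s1 s2 by simp
    show "set xs \<subseteq> S" using Cons.prems(4) by simp
    show "\<forall>x\<in>set xs. \<forall>y\<in>set xs. x \<noteq> y \<longrightarrow> comm x y" using Cons.prems(5) by simp
  qed
  then have "E (x # xs) (x # pre @ post)" using E_ctx[of xs "pre @ post" "[x]" "[]"] by simp
  then show ?case unfolding d using e1 by (blast intro: equivclp_trans)
qed

lemma clique_prod_W:
  assumes "is_clique S comm C"
  obtains cl where "clique_prod S comm C = W cl" "distinct cl" "set cl = C"
proof -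
  have "finite C" using assms finS finite_subset unfolding is_clique_def by blast
  then have "\<exists>xs. distinct xs \<and> set xs = C" using finite_distinct_list by blast
  then have "distinct (SOME xs. distinct xs \<and> set xs = C) \<and> set (SOME xs. distinct xs \<and> set xs = C) = C"
    by (rule someI_ex)
  then show ?thesis using that unfolding clique_prod_def by blast
qed

lemma clique_prod_W2:
  assumes "is_clique S comm C" "distinct cl" "set cl = C"
  shows "clique_prod S comm C = W cl"
proof -
  obtain cl' where c: "clique_prod S comm C = W cl'" "distinct cl'" "set cl' = C" using clique_prod_W[OF assms(1)] .
  have "E cl' cl" using E_clique_perm[of cl' cl] c assms unfolding is_clique_def by auto
  then show ?thesis using c W_eq by simp
qed


lemma reduced_parts:
  assumes "reduced comm (a @ b @ c)" "set a \<subseteq> S" "set b \<subseteq> S" "set c \<subseteq> S"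
  shows "L a = length a" "L b = length b" "L c = length c"
proof -
  have l: "L (a @ b @ c) = length a + length b + length c" using L_reduced[OF _ assms(1)] assms by simp
  have "L (a @ b @ c) \<le> L a + L (b @ c)" using L_app_le[of a "b @ c"] assms by simp
  also have "\<dots> \<le> L a + (L b + L c)" using L_app_le[of b c] assms by simp
  finally have "length a + length b + length c \<le> L a + L b + L c" using l by simp
  moreover have "L a \<le> length a" "L b \<le> length b" "L c \<le> length c" using L_le assms by auto
  ultimately show "L a = length a" "L b = length b" "L c = length c" by auto
qed

lemma asc_right: "set r \<subseteq> S \<Longrightarrow> t \<in> S \<Longrightarrow> reduced comm r \<Longrightarrow>
   (L r < L (r @ [t]) \<longleftrightarrow> cnc comm t (rev r) = None)"
proof -
  assume a: "set r \<subseteq> S" "t \<in> S" "reduced comm r"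
  have rr: "reduced comm (rev r)" using reduced_L[of "rev r"] L_rev[of r] L_reduced[OF a(1,3)] a by simp
  have "L (r @ [t]) = L (t # rev r)" using L_rev[of "r @ [t]"] a by simp
  moreover have "L r = L (rev r)" using L_rev a by simp
  ultimately have "L r < L (r @ [t]) \<longleftrightarrow> \<not> LD t (rev r)" using L_Cons_pm[of "rev r" t] a by auto
  then show ?thesis using L_desc[OF a(2) _ rr] a by simp
qed

lemma A_words:
  assumes "(w', C, w'') \<in> A_set S comm (W r0)" "set r0 \<subseteq> S"
  obtains r1 cl r2 where "w' = W r1" "w'' = W r2" "clique_prod S comm C = W cl" "distinct cl" "set cl = C"
    "is_clique S comm C" "set r1 \<subseteq> S" "set r2 \<subseteq> S" "set cl \<subseteq> S" "reduced comm r1" "reduced comm r2"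
    "reduced comm (r1 @ cl @ r2)" "E r0 (r1 @ cl @ r2)"
    "\<forall>t\<in>S. (\<forall>u\<in>C. t = u \<or> comm t u) \<longrightarrow> cnc comm t (rev r1) = None"
proof -
  from assms(1) have a: "w' \<in> G" "w'' \<in> G" "is_clique S comm C"
    "W r0 = wmul S comm (wmul S comm w' (clique_prod S comm C)) w''"
    "wlen (W r0) = wlen w' + wlen (clique_prod S comm C) + wlen w''"
    "\<forall>s\<in>S. (\<forall>t\<in>C. wmul S comm (wgen S comm s) (wgen S comm t) = wmul S comm (wgen S comm t) (wgen S comm s))
       \<longrightarrow> wlen w' < wlen (wmul S comm w' (wgen S comm s))"
    unfolding A_set_def by auto
  obtain r1 where r1: "set r1 \<subseteq> S" "reduced comm r1" "w' = W r1" using ex_red[OF a(1)] by blast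
  obtain r2 where r2: "set r2 \<subseteq> S" "reduced comm r2" "w'' = W r2" using ex_red[OF a(2)] by blast
  obtain cl where cl: "clique_prod S comm C = W cl" "distinct cl" "set cl = C" using clique_prod_W[OF a(3)] by blast
  have clS: "set cl \<subseteq> S" using cl a(3) unfolding is_clique_def by simp
  have e: "E r0 (r1 @ cl @ r2)" using a(4) r1 r2 cl W_eq by (simp add: wmul_W)
  have "L r0 = length r1 + length cl + length r2"
    using a(5) r1 r2 cl L_reduced reduced_distinct[OF cl(2)] clS by simp
  then have "L (r1 @ cl @ r2) = length (r1 @ cl @ r2)" using L_E[OF e] by simp
  then have red: "reduced comm (r1 @ cl @ r2)" using reduced_L r1 r2 clS by simp
  have c3: "\<forall>t\<in>S. (\<forall>u\<in>C. t = u \<or> comm t u) \<longrightarrow> cnc comm t (rev r1) = None"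
  proof (intro ballI impI)
    fix t assume t: "t \<in> S" "\<forall>u\<in>C. t = u \<or> comm t u"
    have "\<forall>u\<in>C. wmul S comm (wgen S comm t) (wgen S comm u) = wmul S comm (wgen S comm u) (wgen S comm t)"
    proof
      fix u assume "u \<in> C"
      then have "u \<in> S" "t = u \<or> comm t u" using t cl clS by auto
      then show "wmul S comm (wgen S comm t) (wgen S comm u) = wmul S comm (wgen S comm u) (wgen S comm t)"
        using Zchar[of t u] t by (simp add: wgen_W wmul_W)
    qed
    then have "L r1 < L (r1 @ [t])" using a(6) t r1 by (simp add: wgen_W wmul_W)
    then show "cnc comm t (rev r1) = None" using asc_right r1 t by simp
  qed
  show ?thesis using that[OF r1(3) r2(3) cl(1,2,3) a(3) r1(1) r2(1) clS r1(2) r2(2) red e c3] .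
qed

lemma A_intro:
  assumes "set r1 \<subseteq> S" "set r2 \<subseteq> S" "set cl \<subseteq> S" "distinct cl"
    "\<forall>x\<in>set cl. \<forall>y\<in>set cl. x \<noteq> y \<longrightarrow> comm x y"
    "reduced comm (r1 @ cl @ r2)" "E r0 (r1 @ cl @ r2)"
    "\<forall>t\<in>S. (\<forall>u\<in>set cl. t = u \<or> comm t u) \<longrightarrow> cnc comm t (rev r1) = None"
  shows "(W r1, set cl, W r2) \<in> A_set S comm (W r0)"
proof -
  have cq: "is_clique S comm (set cl)" using assms(3,5) unfolding is_clique_def by blast
  have cp: "clique_prod S comm (set cl) = W cl" using clique_prod_W2[OF cq assms(4) refl] .
  have lens: "L r1 = length r1" "L cl = length cl" "L r2 = length r2" using reduced_parts[OF assms(6,1,3,2)] by auto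
  have r1r: "reduced comm r1" using reduced_L[OF assms(1) lens(1)] .
  have l0: "L r0 = length r1 + length cl + length r2"
    using L_E[OF assms(7)] L_reduced[OF _ assms(6)] assms(1-3) by simp
  have G1: "W r1 \<in> G" "W r2 \<in> G" using assms G_iff by auto
  have c3: "\<forall>s\<in>S. (\<forall>t\<in>set cl. wmul S comm (wgen S comm s) (wgen S comm t) = wmul S comm (wgen S comm t) (wgen S comm s))
       \<longrightarrow> wlen (W r1) < wlen (wmul S comm (W r1) (wgen S comm s))"
  proof (intro ballI impI)
    fix s assume s: "s \<in> S" "\<forall>t\<in>set cl. wmul S comm (wgen S comm s) (wgen S comm t) = wmul S comm (wgen S comm t) (wgen S comm s)"
    have "\<forall>u\<in>set cl. s = u \<or> comm s u"
    proof
      fix u assume u: "u \<in> set cl"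
      then have "W [s, u] = W [u, s]" using s by (simp add: wgen_W wmul_W)
      then show "s = u \<or> comm s u" using Zchar[of s u] s u assms(3) by auto
    qed
    then have "cnc comm s (rev r1) = None" using assms(8) s by blast
    then have "L r1 < L (r1 @ [s])" using asc_right[OF assms(1) s(1) r1r] by simp
    then show "wlen (W r1) < wlen (wmul S comm (W r1) (wgen S comm s))" by (simp add: wgen_W wmul_W)
  qed
  have "W r0 = wmul S comm (wmul S comm (W r1) (clique_prod S comm (set cl))) (W r2)"
    using cp assms(7) W_eq by (simp add: wmul_W)
  moreover have "wlen (W r0) = wlen (W r1) + wlen (clique_prod S comm (set cl)) + wlen (W r2)"
    using cp lens l0 by simp
  ultimately show ?thesis unfolding A_set_def using G1 cq c3 by blast
qed


lemma E_move_app: "s \<in> S \<Longrightarrow> set pre \<subseteq> S \<Longrightarrow> \<forall>x\<in>set pre. x \<noteq> s \<and> comm x s \<Longrightarrow> W (s # pre @ v) = W (pre @ s # v)"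
  using E_move W_eq by blast

lemma finite_A: "set r \<subseteq> S \<Longrightarrow> finite (A_set S comm (W r))"
proof -
  assume rS: "set r \<subseteq> S"
  define B where "B = {xs. set xs \<subseteq> S \<and> length xs \<le> length r}"
  have fB: "finite B" unfolding B_def using finite_lists_length_le[OF finS] .
  have "A_set S comm (W r) \<subseteq> (W ` B) \<times> Pow S \<times> (W ` B)"
  proof
    fix b assume b: "b \<in> A_set S comm (W r)"
    obtain w' C w'' where bb: "b = (w', C, w'')" by (cases b) auto
    obtain r1 cl r2 where h: "w' = W r1" "w'' = W r2" "clique_prod S comm C = W cl" "distinct cl" "set cl = C"
      "is_clique S comm C" "set r1 \<subseteq> S" "set r2 \<subseteq> S" "set cl \<subseteq> S" "reduced comm r1" "reduced comm r2"
      "reduced comm (r1 @ cl @ r2)" "E r (r1 @ cl @ r2)"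
      "\<forall>t\<in>S. (\<forall>u\<in>C. t = u \<or> comm t u) \<longrightarrow> cnc comm t (rev r1) = None"
      using b rS unfolding bb by (rule A_words)
    have "length (r1 @ cl @ r2) = L r" using L_E[OF h(13)] L_reduced[OF _ h(12)] h(7,8,9) by simp
    also have "\<dots> \<le> length r" using L_le[OF rS] .
    finally have "length r1 \<le> length r" "length r2 \<le> length r" by auto
    then have "r1 \<in> B" "r2 \<in> B" using h(7,8) unfolding B_def by auto
    then show "b \<in> (W ` B) \<times> Pow S \<times> (W ` B)" using bb h(1,2,5,9) by auto
  qed
  moreover have "finite ((W ` B) \<times> Pow S \<times> (W ` B))" using fB finS by simp
  ultimately show ?thesis by (rule finite_subset)
qed

lemma term_eval:
  assumes "set r1 \<subseteq> S" "set r2 \<subseteq> S" "is_clique S comm C" "distinct cl" "set cl = C" "set z \<subseteq> S"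
  shows "shift_op S comm (W r1) (proj_op S comm (clique_prod S comm C) (shift_op S comm (W r2) \<xi>)) (W z) =
     (if (\<forall>t\<in>C. LD t (rev r1 @ z)) then \<xi> (W (rev r2 @ rev r1 @ z)) else 0)"
proof -
  have cp: "clique_prod S comm C = W cl" using clique_prod_W2[OF assms(3,4,5)] .
  have clS: "set cl \<subseteq> S" using assms(3,5) unfolding is_clique_def by simp
  have clq: "\<forall>x\<in>set cl. \<forall>y\<in>set cl. x \<noteq> y \<longrightarrow> comm x y" using assms(3,5) unfolding is_clique_def by blast
  have lcl: "L cl = length cl" using L_reduced[OF clS reduced_distinct[OF assms(4)]] .
  have q: "int (L (rev cl @ rev r1 @ z)) = int (L (rev r1 @ z)) - int (length cl) \<longleftrightarrow> (\<forall>t\<in>set cl. LD t (rev r1 @ z))"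
    using Q_char[OF assms(4) clS clq] assms(1,6) by simp
  show ?thesis unfolding shift_op_def proj_op_def cp
    using q lcl assms(5) by (simp add: winv_W wmul_W)
qed

end

locale step = racg comm S for comm :: "'a \<Rightarrow> 'a \<Rightarrow> bool" and S +
  fixes s :: 'a and r0 :: "'a list"
  assumes sS: "s \<in> S" and r0S: "set r0 \<subseteq> S" and sr0: "reduced comm (s # r0)"
begin

abbreviation A0 where "A0 \<equiv> A_set S comm (W r0)"
abbreviation A1 where "A1 \<equiv> A_set S comm (W (s # r0))"

definition phi1 where "phi1 t = (case t of (a, C, b) \<Rightarrow> (wmul S comm (W [s]) a, C, b))"
definition phi2 where "phi2 t = (case t of (a, C, b) \<Rightarrow> (a, C, wmul S comm (W [s]) b))"
definition phi3 where "phi3 t = (case t of (a, C, b) \<Rightarrow> (a, insert s C, b))"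
definition caseI where "caseI t = (case t of (a, C, b) \<Rightarrow> (\<forall>u\<in>C. s = u \<or> comm s u) \<and> wmul S comm (W [s]) a = wmul S comm a (W [s]))"
definition TT where "TT t = (if caseI t then {phi2 t, phi3 t} else {phi1 t})"

lemma r0_red: "reduced comm r0" and s_r0: "cnc comm s r0 = None"
  using sr0 by auto

lemma s_asc_word: "E r0 y \<Longrightarrow> reduced comm y \<Longrightarrow> set y \<subseteq> S \<Longrightarrow> cnc comm s y = None"
proof -
  assume a: "E r0 y" "reduced comm y" "set y \<subseteq> S"
  have "L (s # r0) = Suc (L r0)" using L_asc[OF sS r0S r0_red] s_r0 by simp
  moreover have "L (s # r0) = L (s # y)" using L_E E_ctx[OF a(1), of "[s]" "[]"] by simp
  moreover have "L r0 = L y" using L_E[OF a(1)] .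
  ultimately show ?thesis using L_asc[OF sS a(3) a(2)] by simp
qed

lemma A0_words:
  assumes "(w', C, w'') \<in> A0"
  obtains r1 cl r2 where "w' = W r1" "w'' = W r2" "clique_prod S comm C = W cl" "distinct cl" "set cl = C"
    "is_clique S comm C" "set r1 \<subseteq> S" "set r2 \<subseteq> S" "set cl \<subseteq> S" "reduced comm r1" "reduced comm r2"
    "reduced comm (r1 @ cl @ r2)" "E r0 (r1 @ cl @ r2)"
    "\<forall>t\<in>S. (\<forall>u\<in>C. t = u \<or> comm t u) \<longrightarrow> cnc comm t (rev r1) = None"
    "cnc comm s (r1 @ cl @ r2) = None" "cnc comm s r1 = None"
proof -
  obtain r1 cl r2 where h: "w' = W r1" "w'' = W r2" "clique_prod S comm C = W cl" "distinct cl" "set cl = C"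
    "is_clique S comm C" "set r1 \<subseteq> S" "set r2 \<subseteq> S" "set cl \<subseteq> S" "reduced comm r1" "reduced comm r2"
    "reduced comm (r1 @ cl @ r2)" "E r0 (r1 @ cl @ r2)"
    "\<forall>t\<in>S. (\<forall>u\<in>C. t = u \<or> comm t u) \<longrightarrow> cnc comm t (rev r1) = None"
    using assms r0S by (rule A_words)
  have n: "cnc comm s (r1 @ cl @ r2) = None" using s_asc_word[OF h(13) h(12)] h(7,8,9) by simp
  have n1: "cnc comm s r1 = None"
  proof (rule ccontr)
    assume "cnc comm s r1 \<noteq> None"
    then obtain u where "cnc comm s r1 = Some u" by auto
    then show False using cnc_app_Some[of comm s r1 u "cl @ r2"] n by simp
  qed
  show ?thesis using that[OF h n n1] .
qed

lemma caseI_words: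
  assumes "set r1 \<subseteq> S" "reduced comm r1" "cnc comm s r1 = None"
  shows "caseI (W r1, C, b) \<longleftrightarrow> (\<forall>u\<in>C. s = u \<or> comm s u) \<and> (\<forall>x\<in>set r1. x \<noteq> s \<and> comm x s)"
proof -
  have "wmul S comm (W [s]) (W r1) = wmul S comm (W r1) (W [s]) \<longleftrightarrow> (\<forall>x\<in>set r1. x \<noteq> s \<and> comm x s)"
  proof
    assume "wmul S comm (W [s]) (W r1) = wmul S comm (W r1) (W [s])"
    then have "W (s # r1) = W (r1 @ [s])" by (simp add: wmul_W)
    then show "\<forall>x\<in>set r1. x \<noteq> s \<and> comm x s" using comm_of_W[OF sS assms] by blast
  next
    assume "\<forall>x\<in>set r1. x \<noteq> s \<and> comm x s"
    then have "W (s # r1 @ []) = W (r1 @ s # [])" using E_move_app[OF sS assms(1)] by blast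
    then show "wmul S comm (W [s]) (W r1) = wmul S comm (W r1) (W [s])" by (simp add: wmul_W)
  qed
  then show ?thesis unfolding caseI_def by simp
qed

lemma phi1_mem:
  assumes "t \<in> A0" "\<not> caseI t"
  shows "phi1 t \<in> A1"
proof -
  obtain w' C w'' where t: "t = (w', C, w'')" by (cases t) auto
  obtain r1 cl r2 where h: "w' = W r1" "w'' = W r2" "clique_prod S comm C = W cl" "distinct cl" "set cl = C"
    "is_clique S comm C" "set r1 \<subseteq> S" "set r2 \<subseteq> S" "set cl \<subseteq> S" "reduced comm r1" "reduced comm r2"
    "reduced comm (r1 @ cl @ r2)" "E r0 (r1 @ cl @ r2)"
    "\<forall>t\<in>S. (\<forall>u\<in>C. t = u \<or> comm t u) \<longrightarrow> cnc comm t (rev r1) = None"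
    "cnc comm s (r1 @ cl @ r2) = None" "cnc comm s r1 = None"
    using assms(1) unfolding t by (rule A0_words)
  have ni: "\<not> ((\<forall>u\<in>C. s = u \<or> comm s u) \<and> (\<forall>x\<in>set r1. x \<noteq> s \<and> comm x s))"
    using assms(2) t h(1) by (simp add: caseI_words[OF h(7) h(10) h(16)])
  have "(W (s # r1), set cl, W r2) \<in> A1"
  proof (rule A_intro)
    show "set (s # r1) \<subseteq> S" using h sS by simp
    show "set r2 \<subseteq> S" "set cl \<subseteq> S" "distinct cl" using h by auto
    show "\<forall>x\<in>set cl. \<forall>y\<in>set cl. x \<noteq> y \<longrightarrow> comm x y" using h(6) h(5) unfolding is_clique_def by blast
    show "reduced comm ((s # r1) @ cl @ r2)" using h(12) h(15) by simp
    show "E (s # r0) ((s # r1) @ cl @ r2)" using E_ctx[OF h(13), of "[s]" "[]"] by simp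
    show "\<forall>t\<in>S. (\<forall>u\<in>set cl. t = u \<or> comm t u) \<longrightarrow> cnc comm t (rev (s # r1)) = None"
    proof (intro ballI impI)
      fix t assume t1: "t \<in> S" "\<forall>u\<in>set cl. t = u \<or> comm t u"
      have n: "cnc comm t (rev r1) = None" using h(14) t1 h(5) by blast
      show "cnc comm t (rev (s # r1)) = None"
      proof (rule ccontr)
        assume "cnc comm t (rev (s # r1)) \<noteq> None"
        then have "cnc comm t (rev r1 @ [s]) \<noteq> None" by simp
        from cnc_app_None[OF n this] have c: "\<forall>x\<in>set (rev r1). x \<noteq> t \<and> comm x t" "cnc comm t [s] \<noteq> None" by auto
        have ts: "t = s" using c(2) by (auto split: if_splits)
        show False using ni c(1) ts t1(2) h(5) by auto
      qed
    qed
  qed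
  then show ?thesis using t h by (simp add: phi1_def wmul_W)
qed

lemma caseI_facts:
  assumes "t \<in> A0" "caseI t" "t = (w', C, w'')"
    "w' = W r1" "w'' = W r2" "distinct cl" "set cl = C"
    "set r1 \<subseteq> S" "set r2 \<subseteq> S" "set cl \<subseteq> S" "reduced comm r1"
    "cnc comm s (r1 @ cl @ r2) = None" "cnc comm s r1 = None"
  shows "\<forall>x\<in>set r1. x \<noteq> s \<and> comm x s" "\<forall>u\<in>C. s \<noteq> u \<and> comm s u" "s \<notin> C" "cnc comm s r2 = None"
proof -
  have "caseI (W r1, C, w'')" using assms(2,3,4) by simp
  then have ci: "(\<forall>u\<in>C. s = u \<or> comm s u)" "(\<forall>x\<in>set r1. x \<noteq> s \<and> comm x s)"
    using caseI_words[OF assms(8,11,13), of C w''] by auto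
  show "\<forall>x\<in>set r1. x \<noteq> s \<and> comm x s" using ci by simp
  have cn: "cnc comm s (cl @ r2) = None" using cnc_app_comm[of r1 s comm "cl @ r2", OF ci(2)] assms(12) by simp
  show sn: "s \<notin> C"
  proof
    assume "s \<in> C"
    then obtain pre post where d: "cl = pre @ s # post" using split_list assms(7) by metis
    have "\<forall>x\<in>set pre. x \<noteq> s \<and> comm x s"
    proof
      fix x assume x: "x \<in> set pre"
      then have "x \<noteq> s" using assms(6) d by auto
      moreover have "x \<in> C" using x d assms(7) by auto
      ultimately have "comm s x" using ci(1) by metis
      then show "x \<noteq> s \<and> comm x s" using csym \<open>x \<noteq> s\<close> by blast
    qed
    then have "cnc comm s (cl @ r2) \<noteq> None" using cnc_pre[of pre s comm "post @ r2"] d by simp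
    then show False using cn by simp
  qed
  show cu: "\<forall>u\<in>C. s \<noteq> u \<and> comm s u" using ci(1) sn by auto
  have "\<forall>x\<in>set cl. x \<noteq> s \<and> comm x s"
  proof
    fix x assume "x \<in> set cl"
    then have "s \<noteq> x \<and> comm s x" using cu assms(7) by simp
    then show "x \<noteq> s \<and> comm x s" using csym[of s x] by auto
  qed
  then show "cnc comm s r2 = None" using cnc_app_comm[of cl s comm r2] cn by simp
qed

lemma phi23_mem:
  assumes "t \<in> A0" "caseI t"
  shows "phi2 t \<in> A1" "phi3 t \<in> A1" "phi2 t \<noteq> phi3 t"
proof -
  obtain w' C w'' where t: "t = (w', C, w'')" by (cases t) auto
  obtain r1 cl r2 where h: "w' = W r1" "w'' = W r2" "clique_prod S comm C = W cl" "distinct cl" "set cl = C"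
    "is_clique S comm C" "set r1 \<subseteq> S" "set r2 \<subseteq> S" "set cl \<subseteq> S" "reduced comm r1" "reduced comm r2"
    "reduced comm (r1 @ cl @ r2)" "E r0 (r1 @ cl @ r2)"
    "\<forall>t\<in>S. (\<forall>u\<in>C. t = u \<or> comm t u) \<longrightarrow> cnc comm t (rev r1) = None"
    "cnc comm s (r1 @ cl @ r2) = None" "cnc comm s r1 = None"
    using assms(1) unfolding t by (rule A0_words)
  note f = caseI_facts[OF assms t h(1,2,4,5,7,8,9,10,15,16)]
  have "\<forall>x\<in>set cl. x \<noteq> s \<and> comm x s" using f(2) h(5) csym by blast
  then have pre_comm: "\<forall>x\<in>set (r1 @ cl). x \<noteq> s \<and> comm x s" using f(1) by auto
  have pS: "set (r1 @ cl) \<subseteq> S" using h by auto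
  have Ws: "W (s # (r1 @ cl) @ r2) = W ((r1 @ cl) @ s # r2)" using E_move_app[OF sS pS pre_comm] .
  have Lsum: "L (s # r1 @ cl @ r2) = Suc (length (r1 @ cl @ r2))"
    using L_asc[OF sS _ h(12)] h(15) L_reduced[OF _ h(12)] h sS by simp
  have Es: "E (s # r0) (s # r1 @ cl @ r2)" using E_ctx[OF h(13), of "[s]" "[]"] by simp
  have clq: "\<forall>x\<in>set cl. \<forall>y\<in>set cl. x \<noteq> y \<longrightarrow> comm x y" using h(6) h(5) unfolding is_clique_def by blast
  have "(W r1, set cl, W (s # r2)) \<in> A1"
  proof (rule A_intro)
    show "set r1 \<subseteq> S" "set (s # r2) \<subseteq> S" "set cl \<subseteq> S" "distinct cl" using h sS by auto
    show "\<forall>x\<in>set cl. \<forall>y\<in>set cl. x \<noteq> y \<longrightarrow> comm x y" by (rule clq)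
    have "L (r1 @ cl @ s # r2) = length (r1 @ cl @ s # r2)" using Lsum Ws by simp
    then show "reduced comm (r1 @ cl @ s # r2)" using reduced_L[of "r1 @ cl @ s # r2"] h sS by simp
    have e2: "E (s # r1 @ cl @ r2) (r1 @ cl @ s # r2)" using Ws W_eq by simp
    show "E (s # r0) (r1 @ cl @ s # r2)" using equivclp_trans[OF Es e2] by simp
    show "\<forall>t\<in>S. (\<forall>u\<in>set cl. t = u \<or> comm t u) \<longrightarrow> cnc comm t (rev r1) = None" using h(14) h(5) by simp
  qed
  then show "phi2 t \<in> A1" using t h by (simp add: phi2_def wmul_W)
  have "(W r1, set (s # cl), W r2) \<in> A1"
  proof (rule A_intro)
    show "set r1 \<subseteq> S" "set r2 \<subseteq> S" "set (s # cl) \<subseteq> S" using h sS by auto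
    show "distinct (s # cl)" using h f(3) by simp
    have "\<forall>x\<in>set cl. comm x s" using f(2) h(5) csym by blast
    then show "\<forall>x\<in>set (s # cl). \<forall>y\<in>set (s # cl). x \<noteq> y \<longrightarrow> comm x y" using clq f(2) h(5) by simp
    have "W (s # r1 @ cl @ r2) = W (r1 @ s # cl @ r2)" using E_move_app[OF sS h(7) f(1)] by simp
    then have "L (r1 @ s # cl @ r2) = length (r1 @ s # cl @ r2)" using Lsum by simp
    then show "reduced comm (r1 @ (s # cl) @ r2)" using reduced_L[of "r1 @ s # cl @ r2"] h sS by simp
    have e3: "E (s # r1 @ cl @ r2) (r1 @ s # cl @ r2)" using E_move[OF sS h(7) f(1)] by simp
    show "E (s # r0) (r1 @ (s # cl) @ r2)" using equivclp_trans[OF Es e3] by simp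
    show "\<forall>t\<in>S. (\<forall>u\<in>set (s # cl). t = u \<or> comm t u) \<longrightarrow> cnc comm t (rev r1) = None" using h(14) h(5) by simp
  qed
  then show "phi3 t \<in> A1" using t h by (simp add: phi3_def)
  have "C \<noteq> insert s C" using f(3) by blast
  then show "phi2 t \<noteq> phi3 t" using t by (simp add: phi2_def phi3_def)
qed


lemma C_S: "t \<in> A0 \<Longrightarrow> t = (w', C, w'') \<Longrightarrow> C \<subseteq> S"
  unfolding A_set_def is_clique_def by auto

lemma A0_props:
  assumes "t \<in> A0" "t = (w', C, w'')"
  shows "w' \<in> G" "w'' \<in> G" "wlen (wmul S comm (W [s]) w') = Suc (wlen w')" "caseI t \<Longrightarrow> s \<notin> C"
proof -
  show "w' \<in> G" "w'' \<in> G" using assms unfolding A_set_def by auto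
  obtain r1 cl r2 where h: "w' = W r1" "w'' = W r2" "clique_prod S comm C = W cl" "distinct cl" "set cl = C"
    "is_clique S comm C" "set r1 \<subseteq> S" "set r2 \<subseteq> S" "set cl \<subseteq> S" "reduced comm r1" "reduced comm r2"
    "reduced comm (r1 @ cl @ r2)" "E r0 (r1 @ cl @ r2)"
    "\<forall>t\<in>S. (\<forall>u\<in>C. t = u \<or> comm t u) \<longrightarrow> cnc comm t (rev r1) = None"
    "cnc comm s (r1 @ cl @ r2) = None" "cnc comm s r1 = None"
    using assms(1) unfolding assms(2) by (rule A0_words)
  show "wlen (wmul S comm (W [s]) w') = Suc (wlen w')"
    using L_asc[OF sS h(7) h(10)] h(16) h(1) by (simp add: wmul_W)
  show "caseI t \<Longrightarrow> s \<notin> C"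
    using caseI_facts[OF assms(1) _ assms(2) h(1,2,4,5,7,8,9,10,15,16)] by blast
qed

lemma E_from_cnc:
  assumes "cnc comm s y = Some y'" "E (s # r0) y" "set y \<subseteq> S"
  shows "E r0 y'"
proof -
  have e1: "E (s # y) y'" using E_cnc[OF assms(1) sS assms(3)] .
  have e2: "E (s # s # r0) (s # y)" using E_ctx[OF assms(2), of "[s]" "[]"] by simp
  have e3: "E r0 (s # s # r0)" using equivclp_sym[OF E_ss[OF sS]] .
  show ?thesis using equivclp_trans[OF equivclp_trans[OF e3 e2] e1] .
qed

lemma W_cnc: "cnc comm s y = Some y' \<Longrightarrow> set y \<subseteq> S \<Longrightarrow> W (s # y') = W y"
proof -
  assume a: "cnc comm s y = Some y'" "set y \<subseteq> S"
  have "E (s # y) y'" using E_cnc[OF a(1) sS a(2)] .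
  then have "E (s # s # y) (s # y')" using E_ctx[of _ _ "[s]" "[]"] by simp
  then have "E y (s # y')" using equivclp_trans[OF equivclp_sym[OF E_ss[OF sS, of y]]] by blast
  then have "W y = W (s # y')" using W_eq by blast
  then show ?thesis by simp
qed

lemma cover:
  assumes "b \<in> A1"
  shows "\<exists>t\<in>A0. b \<in> TT t"
proof -
  obtain u' D u'' where b: "b = (u', D, u'')" by (cases b) auto
  have s0S: "set (s # r0) \<subseteq> S" using sS r0S by simp
  obtain r1 cl r2 where h: "u' = W r1" "u'' = W r2" "clique_prod S comm D = W cl" "distinct cl" "set cl = D"
    "is_clique S comm D" "set r1 \<subseteq> S" "set r2 \<subseteq> S" "set cl \<subseteq> S" "reduced comm r1" "reduced comm r2"
    "reduced comm (r1 @ cl @ r2)" "E (s # r0) (r1 @ cl @ r2)"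
    "\<forall>t\<in>S. (\<forall>u\<in>D. t = u \<or> comm t u) \<longrightarrow> cnc comm t (rev r1) = None"
    using assms s0S unfolding b by (rule A_words)
  have yS: "set (r1 @ cl @ r2) \<subseteq> S" using h by simp
  have clq: "\<forall>x\<in>set cl. \<forall>y\<in>set cl. x \<noteq> y \<longrightarrow> comm x y" using h(6) h(5) unfolding is_clique_def by blast
  have "L (s # r1 @ cl @ r2) < L (r1 @ cl @ r2)"
  proof -
    have "L (s # r1 @ cl @ r2) = L (s # s # r0)" using L_E E_ctx[OF h(13), of "[s]" "[]"] by simp
    also have "\<dots> = L r0" using L_E[OF E_ss[OF sS]] .
    also have "\<dots> < L (s # r0)" using L_asc[OF sS r0S r0_red] s_r0 by simp
    also have "\<dots> = L (r1 @ cl @ r2)" using L_E[OF h(13)] .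
    finally show ?thesis .
  qed
  then have dsc: "cnc comm s (r1 @ cl @ r2) \<noteq> None" using L_desc[OF sS yS h(12)] by simp
  show ?thesis
  proof (cases "cnc comm s r1")
    case (Some r1')
    have c1: "cnc comm s (r1 @ cl @ r2) = Some (r1' @ cl @ r2)" using cnc_app_Some[OF Some] by simp
    have r1'S: "set r1' \<subseteq> S" using cnc_set[OF Some] h(7) by auto
    have r1'r: "reduced comm r1'" "cnc comm s r1' = None" using reduced_cnc[OF Some h(10)] by auto
    have Wr1: "W (s # r1') = W r1" using W_cnc[OF Some h(7)] .
    have rr1: "reduced comm (rev r1)"
      using reduced_L[of "rev r1"] L_rev[of r1] L_reduced[OF h(7,10)] h(7) by simp
    have "E (s # r1') r1" using Wr1 W_eq[of "s # r1'" r1] by simp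
    then have "E (rev (s # r1')) (rev r1)" by (rule E_rev)
    then have "W (rev r1' @ [s]) = W (rev r1)" using W_eq by simp
    then have Wrev: "W (rev r1) = W (rev r1' @ [s])" by simp
    have lr1: "length r1 = Suc (length r1')" using cnc_length[OF Some] .
    have rr1': "reduced comm (rev r1' @ [s])"
    proof -
      have "L (rev r1' @ [s]) = L (rev r1)" using Wrev by simp
      also have "\<dots> = length r1" using L_rev[of r1] L_reduced[OF h(7,10)] h(7) by simp
      finally show ?thesis using reduced_L[of "rev r1' @ [s]"] r1'S sS lr1 by simp
    qed
    define t where "t = (W r1', D, W r2)"
    have tA: "t \<in> A0" unfolding t_def h(5)[symmetric]
    proof (rule A_intro)
      show "set r1' \<subseteq> S" "set r2 \<subseteq> S" "set cl \<subseteq> S" "distinct cl" using r1'S h(8) h(9) h(4) by auto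
      show "\<forall>x\<in>set cl. \<forall>y\<in>set cl. x \<noteq> y \<longrightarrow> comm x y" by (rule clq)
      show "reduced comm (r1' @ cl @ r2)" using reduced_cnc[OF c1 h(12)] by simp
      show "E r0 (r1' @ cl @ r2)" using E_from_cnc[OF c1 h(13) yS] .
      show "\<forall>t\<in>S. (\<forall>u\<in>set cl. t = u \<or> comm t u) \<longrightarrow> cnc comm t (rev r1') = None"
      proof (intro ballI impI)
        fix a assume a: "a \<in> S" "\<forall>u\<in>set cl. a = u \<or> comm a u"
        show "cnc comm a (rev r1') = None"
        proof (rule ccontr)
          assume "cnc comm a (rev r1') \<noteq> None"
          then obtain v where "cnc comm a (rev r1') = Some v" by auto
          then have "cnc comm a (rev r1' @ [s]) \<noteq> None" using cnc_app_Some[of comm a "rev r1'" v "[s]"] by simp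
          then have "LD a (rev r1' @ [s])" using LD_reduced[of "rev r1' @ [s]" a] rr1' r1'S sS a(1) by simp
          moreover have "E (rev r1) (rev r1' @ [s])" using Wrev W_eq[of "rev r1" "rev r1' @ [s]"] by simp
          ultimately have "LD a (rev r1)" using LD_E[of "rev r1" "rev r1' @ [s]" a] by simp
          then have "cnc comm a (rev r1) \<noteq> None" using LD_reduced[of "rev r1" a] rr1 h(7) a(1) by simp
          moreover have "\<forall>u\<in>D. a = u \<or> comm a u" using a(2) unfolding h(5) .
          ultimately show False using mp[OF bspec[OF h(14) a(1)]] by simp
        qed
      qed
    qed
    have "\<not> caseI t"
    proof
      assume "caseI t"
      then have ci: "\<forall>u\<in>D. s = u \<or> comm s u" "\<forall>x\<in>set r1'. x \<noteq> s \<and> comm x s"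
        unfolding t_def caseI_words[OF r1'S r1'r(1) r1'r(2)] by auto
      have "W (s # r1' @ []) = W (r1' @ s # [])" using E_move_app[OF sS r1'S ci(2)] .
      then have "E r1 (r1' @ [s])" using Wr1 W_eq by simp
      then have "E (rev r1) (rev (r1' @ [s]))" by (rule E_rev)
      then have "W (rev r1) = W (s # rev r1')" using W_eq by simp
      moreover have "reduced comm (s # rev r1')"
      proof -
        have "L (s # rev r1') = L (rev r1)" using calculation by simp
        also have "\<dots> = length r1" using L_rev[of r1] L_reduced[OF h(7,10)] h(7) by simp
        finally show ?thesis using reduced_L[of "s # rev r1'"] r1'S sS lr1 by simp
      qed
      moreover have "cnc comm s (s # rev r1') \<noteq> None" by simp
      ultimately have "LD s (s # rev r1')" using LD_reduced[of "s # rev r1'" s] r1'S sS by simp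
      moreover have "E (rev r1) (s # rev r1')" using \<open>E (rev r1) (rev (r1' @ [s]))\<close> by simp
      ultimately have "LD s (rev r1)" using LD_E[of "rev r1" "s # rev r1'" s] by simp
      then have "cnc comm s (rev r1) \<noteq> None" using LD_reduced[of "rev r1" s] rr1 h(7) sS by simp
      then show False using mp[OF bspec[OF h(14) sS] ci(1)] by simp
    qed
    moreover have "phi1 t = b" unfolding t_def b phi1_def using Wr1 h(1,2) by (simp add: wmul_W)
    ultimately show ?thesis using tA unfolding TT_def by auto
  next
    case None
    from cnc_app_None[OF None dsc] have rc: "\<forall>x\<in>set r1. x \<noteq> s \<and> comm x s" and d2: "cnc comm s (cl @ r2) \<noteq> None" by auto
    show ?thesis
    proof (cases "cnc comm s cl")
      case (Some cl')
      obtain pre post where d: "cl = pre @ s # post" "cl' = pre @ post" using cnc_Some_decomp[OF Some] by blast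
      have cl'S: "set cl' \<subseteq> S" using h(9) d by auto
      have dcl': "distinct cl'" using h(4) d by simp
      have scl': "set cl' = D - {s}" using h(4,5) d by auto
      have sD: "s \<in> D" using h(5) d by auto
      have c1: "cnc comm s (r1 @ cl @ r2) = Some (r1 @ cl' @ r2)"
        using cnc_app_Some2[OF rc cnc_app_Some[OF Some, of r2]] by simp
      define t where "t = (W r1, set cl', W r2)"
      have tA: "t \<in> A0" unfolding t_def
      proof (rule A_intro)
        show "set r1 \<subseteq> S" "set r2 \<subseteq> S" "set cl' \<subseteq> S" "distinct cl'" using h(7) h(8) cl'S dcl' by auto
        show "\<forall>x\<in>set cl'. \<forall>y\<in>set cl'. x \<noteq> y \<longrightarrow> comm x y" using clq d by auto
        show "reduced comm (r1 @ cl' @ r2)" using reduced_cnc[OF c1 h(12)] by simp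
        show "E r0 (r1 @ cl' @ r2)" using E_from_cnc[OF c1 h(13) yS] .
        show "\<forall>t\<in>S. (\<forall>u\<in>set cl'. t = u \<or> comm t u) \<longrightarrow> cnc comm t (rev r1) = None"
        proof (intro ballI impI)
          fix a assume a: "a \<in> S" "\<forall>u\<in>set cl'. a = u \<or> comm a u"
          show "cnc comm a (rev r1) = None"
          proof (cases "a = s \<or> comm a s")
            case True
            then have "\<forall>u\<in>D. a = u \<or> comm a u" using a(2) scl' by auto
            then show ?thesis using h(14) a(1) by blast
          next
            case False
            show ?thesis
            proof (rule ccontr)
              assume "cnc comm a (rev r1) \<noteq> None"
              then have "a \<in> set r1" using cnc_mem by fastforce
              then show False using rc False by blast
            qed
          qed
        qed
      qed
      have "\<forall>u\<in>set cl'. s = u \<or> comm s u" using clq d by auto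
      then have "caseI t" unfolding t_def caseI_words[OF h(7) h(10) None] using rc by simp
      moreover have "phi3 t = b" unfolding t_def b phi3_def using scl' sD h(1,2) by auto
      ultimately show ?thesis using tA unfolding TT_def by auto
    next
      case None2: None
      from cnc_app_None[OF None2 d2] have cc: "\<forall>x\<in>set cl. x \<noteq> s \<and> comm x s" and "cnc comm s r2 \<noteq> None" by auto
      then obtain r2' where r2': "cnc comm s r2 = Some r2'" by auto
      have rc2: "\<forall>x\<in>set (r1 @ cl). x \<noteq> s \<and> comm x s" using rc cc by auto
      have c1: "cnc comm s (r1 @ cl @ r2) = Some (r1 @ cl @ r2')"
        using cnc_app_Some2[OF rc2 r2'] by simp
      define t where "t = (W r1, D, W r2')"
      have tA: "t \<in> A0" unfolding t_def h(5)[symmetric]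
      proof (rule A_intro)
        show "set r1 \<subseteq> S" "set r2' \<subseteq> S" "set cl \<subseteq> S" "distinct cl" using h(7) h(8) h(9) h(4) cnc_set[OF r2'] by auto
        show "\<forall>x\<in>set cl. \<forall>y\<in>set cl. x \<noteq> y \<longrightarrow> comm x y" by (rule clq)
        show "reduced comm (r1 @ cl @ r2')" using reduced_cnc[OF c1 h(12)] by simp
        show "E r0 (r1 @ cl @ r2')" using E_from_cnc[OF c1 h(13) yS] .
        show "\<forall>t\<in>S. (\<forall>u\<in>set cl. t = u \<or> comm t u) \<longrightarrow> cnc comm t (rev r1) = None" using h(14) h(5) by simp
      qed
      have "\<forall>u\<in>D. s = u \<or> comm s u" using cc h(5) csym by blast
      then have "caseI t" unfolding t_def caseI_words[OF h(7) h(10) None] using rc by simp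
      moreover have "phi2 t = b" unfolding t_def b phi2_def using W_cnc[OF r2' h(8)] h(1,2) by (simp add: wmul_W)
      ultimately show ?thesis using tA unfolding TT_def by auto
    qed
  qed
qed


lemma cancel_s: "u \<in> G \<Longrightarrow> wmul S comm (W [s]) (wmul S comm (W [s]) u) = u"
proof -
  assume "u \<in> G"
  then obtain xs where xs: "set xs \<subseteq> S" "u = W xs" using G_iff by blast
  have "W (s # s # xs) = W xs" using E_ss[OF sS] W_eq by blast
  then show ?thesis using xs by (simp add: wmul_W)
qed

lemma mix_false:
  assumes ta: "t \<in> A0" and tb: "t' \<in> A0" and tt: "t = (w1, C1, v1)" and tt': "t' = (w2, C2, v2)"
    and e: "wmul S comm (W [s]) w1 = w2"
  shows False
proof -
  note q1 = A0_props[OF ta tt]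
  note q2 = A0_props[OF tb tt']
  have "wlen (wmul S comm (W [s]) w2) = wlen w1" using e cancel_s[OF q1(1)] by simp
  then show False using q2(3) q1(3) e by simp
qed

lemma disj:
  assumes "t \<in> A0" "t' \<in> A0" "b \<in> TT t" "b \<in> TT t'"
  shows "t = t'"
proof -
  obtain w1 C1 v1 where t: "t = (w1, C1, v1)" by (cases t) auto
  obtain w2 C2 v2 where t': "t' = (w2, C2, v2)" by (cases t') auto
  note p1 = A0_props[OF assms(1) t]
  note p2 = A0_props[OF assms(2) t']
  have ph1: "phi1 t = (wmul S comm (W [s]) w1, C1, v1)" "phi2 t = (w1, C1, wmul S comm (W [s]) v1)" "phi3 t = (w1, insert s C1, v1)"
    using t by (auto simp: phi1_def phi2_def phi3_def)
  have ph2: "phi1 t' = (wmul S comm (W [s]) w2, C2, v2)" "phi2 t' = (w2, C2, wmul S comm (W [s]) v2)" "phi3 t' = (w2, insert s C2, v2)"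
    using t' by (auto simp: phi1_def phi2_def phi3_def)
  show ?thesis
  proof (cases "caseI t")
    case False
    then have b: "b = phi1 t" using assms(3) by (simp add: TT_def)
    show ?thesis
    proof (cases "caseI t'")
      case False
      then have "b = phi1 t'" using assms(4) by (simp add: TT_def)
      then have "wmul S comm (W [s]) w1 = wmul S comm (W [s]) w2" "C1 = C2" "v1 = v2" using b ph1 ph2 by auto
      then have "w1 = w2" using cancel_s[OF p1(1)] cancel_s[OF p2(1)] by metis
      then show ?thesis using t t' \<open>C1 = C2\<close> \<open>v1 = v2\<close> by simp
    next
      case True
      then have "b = phi2 t' \<or> b = phi3 t'" using assms(4) by (simp add: TT_def)
      then have "wmul S comm (W [s]) w1 = w2" using b ph1 ph2 by auto
      then show ?thesis using mix_false[OF assms(1,2) t t'] by blast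
    qed
  next
    case True
    then have b: "b = phi2 t \<or> b = phi3 t" using assms(3) by (simp add: TT_def)
    have sC1: "s \<notin> C1" using p1(4) True by simp
    show ?thesis
    proof (cases "caseI t'")
      case False
      then have "b = phi1 t'" using assms(4) by (simp add: TT_def)
      then have "wmul S comm (W [s]) w2 = w1" using b ph1 ph2 by auto
      then show ?thesis using mix_false[OF assms(2,1) t' t] by blast
    next
      case True2: True
      have sC2: "s \<notin> C2" using p2(4) True2 by simp
      have b2: "b = phi2 t' \<or> b = phi3 t'" using assms(4) True2 by (simp add: TT_def)
      show ?thesis
      proof (cases "b = phi2 t")
        case True3: True
        show ?thesis
        proof (cases "b = phi2 t'")
          case True
          then have "w1 = w2" "C1 = C2" "wmul S comm (W [s]) v1 = wmul S comm (W [s]) v2" using True3 ph1 ph2 by auto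
          moreover then have "v1 = v2" using cancel_s[OF p1(2)] cancel_s[OF p2(2)] by metis
          ultimately show ?thesis using t t' by simp
        next
          case False
          then have "b = phi3 t'" using b2 by simp
          then have "C1 = insert s C2" using True3 ph1 ph2 by auto
          then show ?thesis using sC1 by simp
        qed
      next
        case False3: False
        then have b3: "b = phi3 t" using b by simp
        show ?thesis
        proof (cases "b = phi2 t'")
          case True
          then have "C2 = insert s C1" using b3 ph1 ph2 by auto
          then show ?thesis using sC2 by simp
        next
          case False
          then have "b = phi3 t'" using b2 by simp
          then have "w1 = w2" "insert s C1 = insert s C2" "v1 = v2" using b3 ph1 ph2 by auto
          moreover then have "C1 = C2" using sC1 sC2 by (metis insert_ident)
          ultimately show ?thesis using t t' by simp
        qed
      qed
    qed
  qed
qed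


definition fA where "fA (\<xi> :: 'a list set \<Rightarrow> complex) (p :: real) b x = (case b of (w', C, w'') \<Rightarrow>
   complex_of_real (p ^ card C) * shift_op S comm w' (proj_op S comm (clique_prod S comm C) (shift_op S comm w'' \<xi>)) x)"

lemma fA_eval:
  assumes "set r1 \<subseteq> S" "set r2 \<subseteq> S" "is_clique S comm C" "distinct cl" "set cl = C" "set z \<subseteq> S"
  shows "fA \<xi> p (W r1, C, W r2) (W z) =
     (if (\<forall>t\<in>C. LD t (rev r1 @ z)) then complex_of_real (p ^ card C) * \<xi> (W (rev r2 @ rev r1 @ z)) else 0)"
  unfolding fA_def using term_eval[OF assms, of \<xi>] by simp

lemma L_val:
  assumes "t \<in> A0" "set z \<subseteq> S"
  shows "(\<Sum>b\<in>TT t. fA \<xi> p b (W z)) = fA \<xi> p t (W (s # z)) + (if LD s z then complex_of_real p * fA \<xi> p t (W z) else 0)"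
proof -
  obtain w' C w'' where t: "t = (w', C, w'')" by (cases t) auto
  obtain r1 cl r2 where h: "w' = W r1" "w'' = W r2" "clique_prod S comm C = W cl" "distinct cl" "set cl = C"
    "is_clique S comm C" "set r1 \<subseteq> S" "set r2 \<subseteq> S" "set cl \<subseteq> S" "reduced comm r1" "reduced comm r2"
    "reduced comm (r1 @ cl @ r2)" "E r0 (r1 @ cl @ r2)"
    "\<forall>t\<in>S. (\<forall>u\<in>C. t = u \<or> comm t u) \<longrightarrow> cnc comm t (rev r1) = None"
    "cnc comm s (r1 @ cl @ r2) = None" "cnc comm s r1 = None"
    using assms(1) unfolding t by (rule A0_words)
  define y where "y = rev r1 @ z"
  have yS: "set y \<subseteq> S" using h(7) assms(2) unfolding y_def by auto
  define ry where "ry = red comm y"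
  have ryS: "set ry \<subseteq> S" and ryr: "reduced comm ry" and Ery: "E ry y"
    using red_set[OF yS] reduced_red E_red[OF yS] unfolding ry_def by auto
  have CS: "C \<subseteq> S" using h(6) unfolding is_clique_def by simp
  have key: "reduced comm (r1 @ ry) \<and> (LD s z \<longleftrightarrow> cnc comm s (r1 @ ry) \<noteq> None)" if allC: "\<forall>u\<in>C. LD u y"
  proof -
    have "\<forall>a. cnc comm a (rev r1) \<noteq> None \<longrightarrow> cnc comm a ry = None"
    proof (intro allI impI)
      fix a assume a1: "cnc comm a (rev r1) \<noteq> None"
      show "cnc comm a ry = None"
      proof (rule ccontr)
        assume a2: "cnc comm a ry \<noteq> None"
        have aS: "a \<in> S" using cnc_mem[OF a2] ryS by auto
        have "\<forall>u\<in>C. a = u \<or> comm a u"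
        proof
          fix u assume u: "u \<in> C"
          then have "cnc comm u ry \<noteq> None" using allC LD_red[OF yS, of u] CS unfolding ry_def by auto
          then show "a = u \<or> comm a u" using desc_comm_aux[OF a2] by blast
        qed
        then have "cnc comm a (rev r1) = None" using mp[OF bspec[OF h(14) aS]] by simp
        then show False using a1 by simp
      qed
    qed
    then have rr: "reduced comm (r1 @ ry)" using reduced_app[OF h(10) ryr] by simp
    have "E (r1 @ y) z" unfolding y_def using E_cancel[OF h(7)] by simp
    moreover have "E (r1 @ ry) (r1 @ y)" using E_ctx[OF Ery, of r1 "[]"] by simp
    ultimately have "E (r1 @ ry) z" by (rule equivclp_trans[rotated])
    then have "LD s z \<longleftrightarrow> LD s (r1 @ ry)" using LD_E by metis
    also have "\<dots> \<longleftrightarrow> cnc comm s (r1 @ ry) \<noteq> None" using LD_reduced[of "r1 @ ry" s] rr h(7) ryS sS by simp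
    finally show ?thesis using rr by simp
  qed
  have ev0: "fA \<xi> p t (W z) = (if \<forall>u\<in>C. LD u y then complex_of_real (p ^ card C) * \<xi> (W (rev r2 @ y)) else 0)"
    using fA_eval[OF h(7,8,6,4,5) assms(2)] t h(1,2) unfolding y_def by simp
  show ?thesis
  proof (cases "caseI t")
    case False
    then have TT: "TT t = {phi1 t}" by (simp add: TT_def)
    have p1: "phi1 t = (W (s # r1), C, W r2)" using t h(1,2) by (simp add: phi1_def wmul_W)
    have s1S: "set (s # r1) \<subseteq> S" using h(7) sS by simp
    have "fA \<xi> p (phi1 t) (W z) = fA \<xi> p t (W (s # z))"
      using fA_eval[OF s1S h(8,6,4,5) assms(2)] fA_eval[OF h(7,8,6,4,5), of "s # z"] assms(2) sS p1 t h(1,2)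
      by simp
    moreover have "LD s z \<Longrightarrow> fA \<xi> p t (W z) = 0"
    proof -
      assume ls: "LD s z"
      have "\<not> (\<forall>u\<in>C. LD u y)"
      proof
        assume allC: "\<forall>u\<in>C. LD u y"
        from key[OF allC] ls have "cnc comm s (r1 @ ry) \<noteq> None" by simp
        from cnc_app_None[OF h(16) this] have rc: "\<forall>x\<in>set r1. x \<noteq> s \<and> comm x s" and "cnc comm s ry \<noteq> None" by auto
        have "\<forall>u\<in>C. s = u \<or> comm s u"
        proof
          fix u assume u: "u \<in> C"
          then have "cnc comm u ry \<noteq> None" using allC LD_red[OF yS, of u] CS unfolding ry_def by auto
          then show "s = u \<or> comm s u" using desc_comm_aux[OF \<open>cnc comm s ry \<noteq> None\<close>] by blast
        qed
        then have "caseI t" unfolding t h(1) caseI_words[OF h(7) h(10) h(16)] using rc by simp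
        then show False using False by simp
      qed
      then show ?thesis unfolding ev0 by (rule if_not_P)
    qed
    ultimately show ?thesis using TT by simp
  next
    case True
    note f = caseI_facts[OF assms(1) True t h(1,2,4,5,7,8,9,10,15,16)]
    have TT: "TT t = {phi2 t, phi3 t}" using True by (simp add: TT_def)
    have ne: "phi2 t \<noteq> phi3 t" using phi23_mem[OF assms(1) True] by simp
    have p2: "phi2 t = (W r1, C, W (s # r2))" using t h(1,2) by (simp add: phi2_def wmul_W)
    have p3: "phi3 t = (W r1, insert s C, W r2)" using t h(1,2) by (simp add: phi3_def)
    have s2S: "set (s # r2) \<subseteq> S" using h(8) sS by simp
    have rS: "set (rev r1) \<subseteq> S" using h(7) by simp
    have rcs: "\<forall>x\<in>set (rev r1). x \<noteq> s \<and> comm x s" using f(1) by simp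
    have Emv: "E (s # rev r1 @ z) (rev r1 @ s # z)" using E_move[OF sS rS rcs] .
    have e1: "LD u (rev r1 @ s # z) \<longleftrightarrow> LD u y" if u: "u \<in> C" for u
    proof -
      have "LD u (rev r1 @ s # z) \<longleftrightarrow> LD u (s # y)" using LD_E[OF Emv, of u] unfolding y_def by simp
      also have "\<dots> \<longleftrightarrow> LD u y" using LD_comm[of u s y] u CS f(2) csym sS yS by auto
      finally show ?thesis .
    qed
    have e2: "W (rev r2 @ rev r1 @ s # z) = W (rev r2 @ s # y)"
      using E_ctx[OF equivclp_sym[OF Emv], of "rev r2" "[]"] W_eq unfolding y_def by simp
    have A: "fA \<xi> p (phi2 t) (W z) = fA \<xi> p t (W (s # z))"
    proof -
      have "fA \<xi> p (phi2 t) (W z) = (if \<forall>u\<in>C. LD u y then complex_of_real (p ^ card C) * \<xi> (W (rev r2 @ s # y)) else 0)"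
        using fA_eval[OF h(7) s2S h(6,4,5) assms(2)] p2 unfolding y_def by simp
      moreover have "fA \<xi> p t (W (s # z)) = (if \<forall>u\<in>C. LD u (rev r1 @ s # z) then complex_of_real (p ^ card C) * \<xi> (W (rev r2 @ rev r1 @ s # z)) else 0)"
        using fA_eval[OF h(7,8,6,4,5), of "s # z"] assms(2) sS t h(1,2) by simp
      ultimately show ?thesis using e1 e2 by simp
    qed
    have fC: "finite C" using h(5) by auto
    have ins: "is_clique S comm (insert s C)"
      using h(6) f(2) sS csym unfolding is_clique_def by blast
    have B: "fA \<xi> p (phi3 t) (W z) = (if LD s z then complex_of_real p * fA \<xi> p t (W z) else 0)"
    proof -
      have ev3: "fA \<xi> p (phi3 t) (W z) = (if \<forall>u\<in>insert s C. LD u y then complex_of_real (p ^ card (insert s C)) * \<xi> (W (rev r2 @ y)) else 0)"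
        using fA_eval[OF h(7,8) ins, of "s # cl" z] h(4,5) f(3) assms(2) p3 unfolding y_def by simp
      have cd: "card (insert s C) = Suc (card C)" using fC f(3) by simp
      show ?thesis
      proof (cases "\<forall>u\<in>C. LD u y")
        case True
        have "LD s z \<longleftrightarrow> cnc comm s (r1 @ ry) \<noteq> None" using key[OF True] by simp
        also have "\<dots> \<longleftrightarrow> cnc comm s ry \<noteq> None" using cnc_app_comm[of r1 s comm ry] f(1) by simp
        also have "\<dots> \<longleftrightarrow> LD s y" using LD_red[OF yS sS] unfolding ry_def by simp
        finally have "LD s z \<longleftrightarrow> LD s y" .
        then show ?thesis using ev3 ev0 True cd by simp
      next
        case False
        then show ?thesis using ev3 ev0 by auto
      qed
    qed
    have "(\<Sum>b\<in>TT t. fA \<xi> p b (W z)) = fA \<xi> p (phi2 t) (W z) + fA \<xi> p (phi3 t) (W z)"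
      using TT ne by simp
    then show ?thesis using A B by simp
  qed
qed


lemma A1_union: "A1 = (\<Union>t\<in>A0. TT t)"
proof
  show "A1 \<subseteq> (\<Union>t\<in>A0. TT t)" using cover by blast
next
  show "(\<Union>t\<in>A0. TT t) \<subseteq> A1"
  proof
    fix b assume "b \<in> (\<Union>t\<in>A0. TT t)"
    then obtain t where t: "t \<in> A0" "b \<in> TT t" by blast
    show "b \<in> A1"
    proof (cases "caseI t")
      case True then show ?thesis using t phi23_mem[OF t(1) True] by (auto simp: TT_def)
    next
      case False then show ?thesis using t phi1_mem[OF t(1) False] by (auto simp: TT_def)
    qed
  qed
qed

lemma main_step:
  assumes "set z \<subseteq> S"
  shows "(\<Sum>b\<in>A1. fA \<xi> p b (W z)) = (\<Sum>b\<in>A0. fA \<xi> p b (W (s # z))) +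
          (if LD s z then complex_of_real p * (\<Sum>b\<in>A0. fA \<xi> p b (W z)) else 0)"
proof -
  have fin: "finite A0" using finite_A[OF r0S] .
  have finT: "\<forall>t\<in>A0. finite (TT t)" by (simp add: TT_def)
  have dj: "\<forall>t\<in>A0. \<forall>t'\<in>A0. t \<noteq> t' \<longrightarrow> TT t \<inter> TT t' = {}" using disj by blast
  have "(\<Sum>b\<in>A1. fA \<xi> p b (W z)) = (\<Sum>t\<in>A0. \<Sum>b\<in>TT t. fA \<xi> p b (W z))"
    unfolding A1_union by (rule sum.UNION_disjoint[OF fin finT dj])
  also have "\<dots> = (\<Sum>t\<in>A0. fA \<xi> p t (W (s # z)) + (if LD s z then complex_of_real p * fA \<xi> p t (W z) else 0))"
    by (rule sum.cong[OF refl]) (rule L_val[OF _ assms])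
  also have "\<dots> = (\<Sum>b\<in>A0. fA \<xi> p b (W (s # z))) +
          (if LD s z then complex_of_real p * (\<Sum>b\<in>A0. fA \<xi> p b (W z)) else 0)"
    by (cases "LD s z") (simp_all add: sum.distrib sum_distrib_left)
  finally show ?thesis .
qed

end

context racg
begin

definition fA0 where "fA0 (\<xi> :: 'a list set \<Rightarrow> complex) (p :: real) b x = (case b of (w', C, w'') \<Rightarrow>
   complex_of_real (p ^ card C) * shift_op S comm w' (proj_op S comm (clique_prod S comm C) (shift_op S comm w'' \<xi>)) x)"

lemma fA_fA0: "step comm S s r0 \<Longrightarrow> step.fA comm S = fA0"
  by (rule ext)+ (simp add: step.fA_def fA0_def)

lemma base_A: "A_set S comm (W []) = {(W [], {}, W [])}"
proof
  show "A_set S comm (W []) \<subseteq> {(W [], {}, W [])}"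
  proof
    fix b assume b: "b \<in> A_set S comm (W [])"
    obtain w' C w'' where bb: "b = (w', C, w'')" by (cases b) auto
    obtain r1 cl r2 where h: "w' = W r1" "w'' = W r2" "clique_prod S comm C = W cl" "distinct cl" "set cl = C"
      "is_clique S comm C" "set r1 \<subseteq> S" "set r2 \<subseteq> S" "set cl \<subseteq> S" "reduced comm r1" "reduced comm r2"
      "reduced comm (r1 @ cl @ r2)" "E [] (r1 @ cl @ r2)"
      "\<forall>t\<in>S. (\<forall>u\<in>C. t = u \<or> comm t u) \<longrightarrow> cnc comm t (rev r1) = None"
      using b unfolding bb by (rule A_words) simp
    have "length (r1 @ cl @ r2) = L []" using L_E[OF h(13)] L_reduced[OF _ h(12)] h(7,8,9) by simp
    also have "\<dots> = 0" using L_le[of "[]"] by simp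
    finally have "r1 = []" "cl = []" "r2 = []" by auto
    then show "b \<in> {(W [], {}, W [])}" using bb h(1,2,5) by simp
  qed
next
  have "(W [], set [], W []) \<in> A_set S comm (W [])"
    by (rule A_intro) auto
  then show "{(W [], {}, W [])} \<subseteq> A_set S comm (W [])" by simp
qed

lemma hecke_words:
  assumes "set xs \<subseteq> S" "reduced comm xs" "set z \<subseteq> S"
  shows "foldr (\<lambda>s f. hecke_gen S comm p s \<circ> f) xs id \<xi> (W z) = (\<Sum>b\<in>A_set S comm (W xs). fA0 \<xi> p b (W z))"
  using assms
proof (induction xs arbitrary: z)
  case Nil
  have "fA0 \<xi> p (W [], {}, W []) (W z) = \<xi> (W z)"
  proof -
    have cq: "is_clique S comm {}" by (simp add: is_clique_def)
    have "shift_op S comm (W []) (proj_op S comm (clique_prod S comm {}) (shift_op S comm (W []) \<xi>)) (W z) = \<xi> (W z)"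
      using term_eval[of "[]" "[]" "{}" "[]" z \<xi>] cq Nil.prems by simp
    then show ?thesis unfolding fA0_def by simp
  qed
  then show ?case using base_A by simp
next
  case (Cons s xs)
  interpret st: step comm S s xs
    using Cons.prems by unfold_locales auto
  have xsS: "set xs \<subseteq> S" and xsr: "reduced comm xs" and sS: "s \<in> S" using Cons.prems by auto
  have szS: "set (s # z) \<subseteq> S" using sS Cons.prems by simp
  have "foldr (\<lambda>s f. hecke_gen S comm p s \<circ> f) (s # xs) id \<xi> (W z) =
    hecke_gen S comm p s (foldr (\<lambda>s f. hecke_gen S comm p s \<circ> f) xs id \<xi>) (W z)" by simp
  also have "\<dots> = foldr (\<lambda>s f. hecke_gen S comm p s \<circ> f) xs id \<xi> (W (s # z)) +
      (if LD s z then complex_of_real p * foldr (\<lambda>s f. hecke_gen S comm p s \<circ> f) xs id \<xi> (W z) else 0)"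
    unfolding hecke_gen_def by (simp add: wgen_W wmul_W)
  also have "\<dots> = (\<Sum>b\<in>A_set S comm (W xs). fA0 \<xi> p b (W (s # z))) +
      (if LD s z then complex_of_real p * (\<Sum>b\<in>A_set S comm (W xs). fA0 \<xi> p b (W z)) else 0)"
    by (simp only: Cons.IH[OF xsS xsr szS] Cons.IH[OF xsS xsr Cons.prems(3)])
  also have "\<dots> = (\<Sum>b\<in>A_set S comm (W (s # xs)). fA0 \<xi> p b (W z))"
    using st.main_step[OF Cons.prems(3), of \<xi> p] fA_fA0[OF st.step_axioms] by simp
  finally show ?case .
qed

end


theorem lemma2p7:
  fixes S :: "'a set" and comm :: "'a \<Rightarrow> 'a \<Rightarrow> bool" and q p :: real
    and w :: "'a list set" and \<xi> :: "'a list set \<Rightarrow> complex"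
  assumes "finite S"
    and "\<And>s t. comm s t \<Longrightarrow> comm t s"
    and "q > 0"
    and "p = (q - 1) / sqrt q"
    and "w \<in> cox_group S comm"
    and "(\<lambda>x. (cmod (\<xi> x))\<^sup>2) summable_on cox_group S comm"
    and "\<And>x. x \<notin> cox_group S comm \<Longrightarrow> \<xi> x = 0"
  shows "\<forall>x\<in>cox_group S comm.
     hecke_op S comm p w \<xi> x =
     (\<Sum>(w', C, w'')\<in>A_set S comm w.
        complex_of_real (p ^ card C) *
        shift_op S comm w' (proj_op S comm (clique_prod S comm C) (shift_op S comm w'' \<xi>)) x)"
proof -
  interpret R: racg comm S using assms(1,2) by unfold_locales auto
  show ?thesis
  proof
    fix x assume x: "x \<in> cox_group S comm"
    obtain z where z: "set z \<subseteq> S" "x = wcls S comm z" using x R.G_iff by blast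
    obtain r where r: "set r \<subseteq> S" "reduced comm r" "w = wcls S comm r" using R.ex_red[OF assms(5)] by blast
    define xs where "xs = (SOME xs. xs \<in> w \<and> length xs = wlen w)"
    have "r \<in> w \<and> length r = wlen w" using r R.mem_W R.L_reduced[OF r(1,2)] by simp
    then have "\<exists>xs. xs \<in> w \<and> length xs = wlen w" by blast
    then have "xs \<in> w \<and> length xs = wlen w" unfolding xs_def by (rule someI_ex)
    then have xs: "xs \<in> w" "length xs = wlen w" by auto
    have Er: "equivclp (cstep S comm) r xs" using xs(1) r(3) R.mem_W by simp
    have xsS: "set xs \<subseteq> S" using R.E_lists[OF Er] r(1) by simp
    have Wxs: "wcls S comm xs = w" using equivclp_sym[OF Er] r(3) R.W_eq by simp
    have xsr: "reduced comm xs" using R.reduced_L[OF xsS] xs(2) Wxs by simp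
    have "hecke_op S comm p w \<xi> x = foldr (\<lambda>s f. hecke_gen S comm p s \<circ> f) xs id \<xi> (wcls S comm z)"
      unfolding hecke_op_def xs_def[symmetric] z(2) ..
    also have "\<dots> = (\<Sum>b\<in>A_set S comm w. R.fA0 \<xi> p b (wcls S comm z))"
      using R.hecke_words[OF xsS xsr z(1)] Wxs by simp
    also have "\<dots> = (\<Sum>(w', C, w'')\<in>A_set S comm w.
        complex_of_real (p ^ card C) *
        shift_op S comm w' (proj_op S comm (clique_prod S comm C) (shift_op S comm w'' \<xi>)) x)"
      unfolding R.fA0_def z(2) by (rule sum.cong) auto
    finally show "hecke_op S comm p w \<xi> x = (\<Sum>(w', C, w'')\<in>A_set S comm w.
        complex_of_real (p ^ card C) *
        shift_op S comm w' (proj_op S comm (clique_prod S comm C) (shift_op S comm w'' \<xi>)) x)" .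
  qed
qed

end
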